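(* Let $n_1,\dots,n_m$ be positive integers, $n=\prod_{j=1}^m n_j$, and $\Omega=\times_{j=1}^m\overline{\mathbb{C}}^{n_j}$ where $\overline{\mathbb{C}}^{k}=\{x\in\mathbb{C}^k: x^\dagger x=1\}$. Let $\tilde\rho$ be an $n\times n$ density matrix (Hermitian, positive semidefinite, trace one) and let $$\mathscr{C}=\{g(x_1,\dots,x_m)=(\otimes_{j=1}^m x_j)^\dagger G(\otimes_{j=1}^m x_j)\ :\ G \text{ an } n\times n \text{ Hermitian matrix},\ \operatorname{Tr}(G\tilde\rho)\ge 0\}.$$ Let $\mathcal{L}^{\geq}$ denote the set of all bounded real-valued functions $h$ on $\Omega$ with $\inf h\ge 0$. Then the following are equivalent: (1) $\tilde\rho$ is entangled; (2) $\operatorname{posi}(\mathscr{C}\cup\mathcal{L}^{\geq})$ is not coherent, i.e. it contains a function $f$ on $\Omega$ with $\sup f<0$.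
   Context: $\operatorname{posi}$ denotes the conic hull (all finite nonnegative linear combinations). A density matrix on $\mathbb{C}^{n}=\otimes_j\mathbb{C}^{n_j}$ is separable if it is a convex combination of product density matrices $\rho_1\otimes\cdots\otimes\rho_m$ with $\rho_j$ a density matrix on $\mathbb{C}^{n_j}$, and entangled otherwise. *)

theory Defs
  imports "HOL-Analysis.Analysis"
begin

definition hermitian_on :: "'i set \<Rightarrow> ('i \<Rightarrow> 'i \<Rightarrow> complex) \<Rightarrow> bool" where
  "hermitian_on I A \<longleftrightarrow> (\<forall>i\<in>I. \<forall>k\<in>I. A k i = cnj (A i k))"

definition psd_on :: "'i set \<Rightarrow> ('i \<Rightarrow> 'i \<Rightarrow> complex) \<Rightarrow> bool" where
  "psd_on I A \<longleftrightarrow> (\<forall>v :: 'i \<Rightarrow> complex.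
      0 \<le> Re (\<Sum>i\<in>I. \<Sum>k\<in>I. cnj (v i) * A i k * v k))"

definition trace_on :: "'i set \<Rightarrow> ('i \<Rightarrow> 'i \<Rightarrow> complex) \<Rightarrow> complex" where
  "trace_on I A = (\<Sum>i\<in>I. A i i)"

definition density_on :: "'i set \<Rightarrow> ('i \<Rightarrow> 'i \<Rightarrow> complex) \<Rightarrow> bool" where
  "density_on I A \<longleftrightarrow> hermitian_on I A \<and> psd_on I A \<and> trace_on I A = 1"

text \<open>Multi-indices for the tensor product of C^(ns 0), ..., C^(ns (m-1)):
  index set of size prod_{j<m} ns j.\<close>

definition MI :: "(nat \<Rightarrow> nat) \<Rightarrow> nat \<Rightarrow> (nat \<Rightarrow> nat) set" where
  "MI ns m = {i. (\<forall>j<m. i j < ns j) \<and> (\<forall>j\<ge>m. i j = 0)}"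

definition tensor_mat :: "nat \<Rightarrow> (nat \<Rightarrow> nat \<Rightarrow> nat \<Rightarrow> complex) \<Rightarrow> (nat \<Rightarrow> nat) \<Rightarrow> (nat \<Rightarrow> nat) \<Rightarrow> complex" where
  "tensor_mat m \<sigma> i l = (\<Prod>j<m. \<sigma> j (i j) (l j))"

definition tensor_vec :: "nat \<Rightarrow> (nat \<Rightarrow> nat \<Rightarrow> complex) \<Rightarrow> (nat \<Rightarrow> nat) \<Rightarrow> complex" where
  "tensor_vec m x i = (\<Prod>j<m. x j (i j))"

definition separable :: "(nat \<Rightarrow> nat) \<Rightarrow> nat \<Rightarrow> ((nat \<Rightarrow> nat) \<Rightarrow> (nat \<Rightarrow> nat) \<Rightarrow> complex) \<Rightarrow> bool" where
  "separable ns m \<rho> \<longleftrightarrow> (\<exists>(K::nat) (p :: nat \<Rightarrow> real) (\<sigma> :: nat \<Rightarrow> nat \<Rightarrow> nat \<Rightarrow> nat \<Rightarrow> complex).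
      (\<forall>k<K. 0 \<le> p k) \<and> (\<Sum>k<K. p k) = 1 \<and>
      (\<forall>k<K. \<forall>j<m. density_on {..<ns j} (\<sigma> k j)) \<and>
      (\<forall>i\<in>MI ns m. \<forall>l\<in>MI ns m. \<rho> i l = (\<Sum>k<K. complex_of_real (p k) * tensor_mat m (\<sigma> k) i l)))"

definition entangled :: "(nat \<Rightarrow> nat) \<Rightarrow> nat \<Rightarrow> ((nat \<Rightarrow> nat) \<Rightarrow> (nat \<Rightarrow> nat) \<Rightarrow> complex) \<Rightarrow> bool" where
  "entangled ns m \<rho> \<longleftrightarrow> density_on (MI ns m) \<rho> \<and> \<not> separable ns m \<rho>"

definition Omega :: "(nat \<Rightarrow> nat) \<Rightarrow> nat \<Rightarrow> (nat \<Rightarrow> nat \<Rightarrow> complex) set" where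
  "Omega ns m = {x. (\<forall>j<m. (\<Sum>k<ns j. (cmod (x j k))\<^sup>2) = 1 \<and> (\<forall>k\<ge>ns j. x j k = 0))
                    \<and> (\<forall>j\<ge>m. \<forall>k. x j k = 0)}"

text \<open>The function g(x) = (tensor x)^dagger G (tensor x) (real since G is Hermitian).\<close>
definition gfun :: "(nat \<Rightarrow> nat) \<Rightarrow> nat \<Rightarrow> ((nat \<Rightarrow> nat) \<Rightarrow> (nat \<Rightarrow> nat) \<Rightarrow> complex)
    \<Rightarrow> (nat \<Rightarrow> nat \<Rightarrow> complex) \<Rightarrow> real" where
  "gfun ns m G x = Re (\<Sum>i\<in>MI ns m. \<Sum>l\<in>MI ns m.
      cnj (tensor_vec m x i) * G i l * tensor_vec m x l)"

definition Cset :: "(nat \<Rightarrow> nat) \<Rightarrow> nat \<Rightarrow> ((nat \<Rightarrow> nat) \<Rightarrow> (nat \<Rightarrow> nat) \<Rightarrow> complex)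
    \<Rightarrow> ((nat \<Rightarrow> nat \<Rightarrow> complex) \<Rightarrow> real) set" where
  "Cset ns m \<rho> = {gfun ns m G | G. hermitian_on (MI ns m) G \<and>
      0 \<le> Re (\<Sum>i\<in>MI ns m. \<Sum>l\<in>MI ns m. G i l * \<rho> l i)}"

definition Lge :: "(nat \<Rightarrow> nat) \<Rightarrow> nat \<Rightarrow> ((nat \<Rightarrow> nat \<Rightarrow> complex) \<Rightarrow> real) set" where
  "Lge ns m = {h. bounded (h ` Omega ns m) \<and> 0 \<le> (INF x\<in>Omega ns m. h x)}"

definition posi_on :: "'a set \<Rightarrow> ('a \<Rightarrow> real) set \<Rightarrow> ('a \<Rightarrow> real) set" where
  "posi_on \<Omega> S = {f. \<exists>(N::nat) (c :: nat \<Rightarrow> real) (h :: nat \<Rightarrow> 'a \<Rightarrow> real).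
      (\<forall>k<N. 0 \<le> c k \<and> h k \<in> S) \<and> (\<forall>x\<in>\<Omega>. f x = (\<Sum>k<N. c k * h k x))}"

end

theory Submission
  imports Defs "HOL-Library.FuncSet"
begin

definition ext0 :: "nat \<Rightarrow> (nat \<Rightarrow> nat) \<Rightarrow> nat \<Rightarrow> nat" where
  "ext0 m g = (\<lambda>j. if j < m then g j else 0)"

lemma bij_ext0: "bij_betw (ext0 m) (PiE {..<m} (\<lambda>j. {..<ns j})) (MI ns m)"
proof (rule bij_betw_imageI)
  show "inj_on (ext0 m) (PiE {..<m} (\<lambda>j. {..<ns j}))"
    unfolding inj_on_def ext0_def
    by (metis (no_types, lifting) PiE_ext lessThan_iff)
  show "ext0 m ` (PiE {..<m} (\<lambda>j. {..<ns j})) = MI ns m"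
  proof
    show "ext0 m ` (PiE {..<m} (\<lambda>j. {..<ns j})) \<subseteq> MI ns m"
      by (auto simp: ext0_def MI_def PiE_def Pi_def)
    show "MI ns m \<subseteq> ext0 m ` (PiE {..<m} (\<lambda>j. {..<ns j}))"
    proof
      fix i assume i: "i \<in> MI ns m"
      have "restrict i {..<m} \<in> PiE {..<m} (\<lambda>j. {..<ns j})" using i by (auto simp: MI_def)
      moreover have "i = ext0 m (restrict i {..<m})" using i by (auto simp: MI_def ext0_def)
      ultimately show "i \<in> ext0 m ` (PiE {..<m} (\<lambda>j. {..<ns j}))" by blast
    qed
  qed
qed

lemma finite_MI: "finite (MI ns m)"
  using bij_betw_finite[OF bij_ext0[of m ns]] by (simp add: finite_PiE)

lemma sum_MI_prod:
  fixes a :: "nat \<Rightarrow> nat \<Rightarrow> 'c::comm_semiring_1"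
  shows "(\<Sum>i\<in>MI ns m. \<Prod>j<m. a j (i j)) = (\<Prod>j<m. \<Sum>k<ns j. a j k)"
proof -
  have "(\<Prod>j<m. \<Sum>k<ns j. a j k) = (\<Sum>g\<in>PiE {..<m} (\<lambda>j. {..<ns j}). \<Prod>j<m. a j (g j))"
    by (rule prod_sum_PiE) auto
  also have "\<dots> = (\<Sum>g\<in>PiE {..<m} (\<lambda>j. {..<ns j}). \<Prod>j<m. a j (ext0 m g j))"
    by (intro sum.cong prod.cong) (auto simp: ext0_def)
  also have "\<dots> = (\<Sum>i\<in>MI ns m. \<Prod>j<m. a j (i j))"
    using sum.reindex_bij_betw[OF bij_ext0[of m ns], of "\<lambda>i. \<Prod>j<m. a j (i j)"] by simp
  finally show ?thesis by simp
qed

definition qf :: "'i set \<Rightarrow> ('i \<Rightarrow> 'i \<Rightarrow> complex) \<Rightarrow> ('i \<Rightarrow> complex) \<Rightarrow> complex" where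
  "qf I A v = (\<Sum>i\<in>I. \<Sum>k\<in>I. cnj (v i) * A i k * v k)"

lemma psd_onD: "psd_on I A \<Longrightarrow> 0 \<le> Re (qf I A v)"
  by (simp add: psd_on_def qf_def)

lemma qf_two:
  assumes "finite I" "a \<in> I" "b \<in> I" "a \<noteq> b"
  shows "qf I A (\<lambda>i. if i = a then s else if i = b then t else 0) =
    cnj s * A a a * s + cnj s * A a b * t + cnj t * A b a * s + cnj t * A b b * t"
proof -
  let ?v = "\<lambda>i. if i = a then s else if i = b then t else 0"
  have in1: "\<And>i. (\<Sum>k\<in>I. cnj (?v i) * A i k * ?v k) = (\<Sum>k\<in>{a,b}. cnj (?v i) * A i k * ?v k)"
    by (rule sum.mono_neutral_right) (use assms in auto)
  have "qf I A ?v = (\<Sum>i\<in>I. \<Sum>k\<in>{a,b}. cnj (?v i) * A i k * ?v k)"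
    unfolding qf_def by (simp add: in1)
  also have "\<dots> = (\<Sum>i\<in>{a,b}. \<Sum>k\<in>{a,b}. cnj (?v i) * A i k * ?v k)"
    by (rule sum.mono_neutral_right) (use assms in auto)
  also have "\<dots> = cnj s * A a a * s + cnj s * A a b * t + cnj t * A b a * s + cnj t * A b b * t"
    using assms by (simp add: algebra_simps)
  finally show ?thesis .
qed

lemma qf_one:
  assumes "finite I" "a \<in> I"
  shows "qf I A (\<lambda>i. if i = a then 1 else 0) = A a a"
proof -
  let ?v = "\<lambda>i. if i = a then (1::complex) else 0"
  have in1: "\<And>i. (\<Sum>k\<in>I. cnj (?v i) * A i k * ?v k) = (\<Sum>k\<in>{a}. cnj (?v i) * A i k * ?v k)"
    by (rule sum.mono_neutral_right) (use assms in auto)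
  have "qf I A ?v = (\<Sum>i\<in>I. \<Sum>k\<in>{a}. cnj (?v i) * A i k * ?v k)"
    unfolding qf_def by (simp add: in1)
  also have "\<dots> = (\<Sum>i\<in>{a}. \<Sum>k\<in>{a}. cnj (?v i) * A i k * ?v k)"
    by (rule sum.mono_neutral_right) (use assms in auto)
  finally show ?thesis by simp
qed

lemma zero_from_quad:
  fixes z :: complex and c :: real
  assumes "\<And>s. 0 \<le> Re (cnj s * z + cnj z * s) + c"
  shows "z = 0"
proof (rule ccontr)
  assume z: "z \<noteq> 0"
  define l where "l = - (\<bar>c\<bar> + 1) / (2 * (cmod z)\<^sup>2)"
  have nz: "(cmod z)\<^sup>2 > 0" using z by simp
  have cz: "(cmod z)\<^sup>2 = Re z * Re z + Im z * Im z" using cmod_power2[of z] by (simp add: power2_eq_square)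
  have "Re (cnj (of_real l * z) * z + cnj z * (of_real l * z)) = 2 * l * (cmod z)\<^sup>2"
    unfolding cz by (simp add: algebra_simps)
  also have "\<dots> = - (\<bar>c\<bar> + 1)" using nz by (simp add: l_def field_simps)
  finally have "Re (cnj (of_real l * z) * z + cnj z * (of_real l * z)) + c < 0" by linarith
  with assms[of "of_real l * z"] show False by linarith
qed

lemma qf_insert_split:
  assumes "finite J" "a \<notin> J"
  shows "qf (insert a J) A v = cnj (v a) * A a a * v a + cnj (v a) * (\<Sum>k\<in>J. A a k * v k)
     + (\<Sum>i\<in>J. cnj (v i) * A i a) * v a + qf J A v"
proof -
  have "qf (insert a J) A v = (\<Sum>k\<in>insert a J. cnj (v a) * A a k * v k) + (\<Sum>i\<in>J. \<Sum>k\<in>insert a J. cnj (v i) * A i k * v k)"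
    unfolding qf_def using assms by (simp add: sum.insert)
  also have "(\<Sum>k\<in>insert a J. cnj (v a) * A a k * v k) = cnj (v a) * A a a * v a + cnj (v a) * (\<Sum>k\<in>J. A a k * v k)"
    using assms by (simp add: sum_distrib_left mult.assoc)
  also have "(\<Sum>i\<in>J. \<Sum>k\<in>insert a J. cnj (v i) * A i k * v k) = (\<Sum>i\<in>J. cnj (v i) * A i a * v a) + qf J A v"
    using assms by (simp add: qf_def sum.distrib)
  also have "(\<Sum>i\<in>J. cnj (v i) * A i a * v a) = (\<Sum>i\<in>J. cnj (v i) * A i a) * v a"
    by (simp add: sum_distrib_right)
  finally show ?thesis by (simp add: algebra_simps)
qed

lemma chol:
  assumes "finite I"
  shows "hermitian_on I A \<Longrightarrow> psd_on I A \<Longrightarrow>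
    \<exists>V. \<forall>i\<in>I. \<forall>k\<in>I. A i k = (\<Sum>r\<in>I. V r i * cnj (V r k))"
  using assms
proof (induction I arbitrary: A rule: finite_induct)
  case empty
  then show ?case by simp
next
  case (insert a J A)
  note herm = insert.prems(1) and psd = insert.prems(2)
  have fin: "finite (insert a J)" using insert by simp
  have hA: "\<And>i k. i \<in> insert a J \<Longrightarrow> k \<in> insert a J \<Longrightarrow> A k i = cnj (A i k)"
    using herm unfolding hermitian_on_def by blast
  define \<alpha> where "\<alpha> = Re (A a a)"
  have Aaa: "A a a = of_real \<alpha>"
    using hA[of a a] by (simp add: \<alpha>_def complex_eq_iff)
  have \<alpha>ge: "\<alpha> \<ge> 0"
    using psd_onD[OF psd, of "\<lambda>i. if i = a then 1 else 0"] qf_one[OF fin, of a A] by (simp add: \<alpha>_def)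
  show ?case
  proof (cases "\<alpha> = 0")
    case True
    have Aak: "A a k = 0" if k: "k \<in> J" for k
    proof (rule zero_from_quad[where c = "Re (A k k)"])
      fix s
      have ak: "a \<noteq> k" using k insert by auto
      have "0 \<le> Re (qf (insert a J) A (\<lambda>i. if i = a then s else if i = k then 1 else 0))"
        by (rule psd_onD[OF psd])
      also have "qf (insert a J) A (\<lambda>i. if i = a then s else if i = k then 1 else 0)
          = cnj s * A a a * s + cnj s * A a k * 1 + cnj 1 * A k a * s + cnj 1 * A k k * 1"
        by (rule qf_two) (use fin k ak in auto)
      finally show "0 \<le> Re (cnj s * A a k + cnj (A a k) * s) + Re (A k k)"
        using Aaa True hA[of a k] k by simp
    qed
    have Aka: "A k a = 0" if "k \<in> insert a J" for k
      using that Aak hA[of a k] Aaa True by auto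
    have Aak': "A a k = 0" if "k \<in> insert a J" for k
      using that Aak Aaa True by auto
    have hJ: "hermitian_on J A" using herm unfolding hermitian_on_def by blast
    have pJ: "psd_on J A"
      unfolding psd_on_def
    proof
      fix v :: "_ \<Rightarrow> complex"
      have "qf (insert a J) A (v(a := 0)) = qf J A (v(a:=0))"
        using qf_insert_split[OF insert(1,2), of A "v(a:=0)"] by simp
      also have "qf J A (v(a:=0)) = qf J A v"
        unfolding qf_def using insert(2) by (intro sum.cong) auto
      finally show "0 \<le> Re (\<Sum>i\<in>J. \<Sum>k\<in>J. cnj (v i) * A i k * v k)"
        using psd_onD[OF psd, of "v(a:=0)"] by (simp add: qf_def)
    qed
    obtain V where V: "\<forall>i\<in>J. \<forall>k\<in>J. A i k = (\<Sum>r\<in>J. V r i * cnj (V r k))"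
      using insert.IH[OF hJ pJ] by blast
    define V' where "V' = (\<lambda>r. if r = a then (\<lambda>_. 0) else (V r)(a := 0))"
    show ?thesis
    proof (intro exI ballI)
      fix i k assume i: "i \<in> insert a J" and k: "k \<in> insert a J"
      have "(\<Sum>r\<in>insert a J. V' r i * cnj (V' r k)) = (\<Sum>r\<in>J. V' r i * cnj (V' r k))"
        using insert(1,2) by (simp add: V'_def)
      also have "\<dots> = (\<Sum>r\<in>J. ((V r)(a:=0)) i * cnj (((V r)(a:=0)) k))"
        using insert(2) by (intro sum.cong) (auto simp: V'_def)
      finally have e: "(\<Sum>r\<in>insert a J. V' r i * cnj (V' r k)) = (\<Sum>r\<in>J. ((V r)(a:=0)) i * cnj (((V r)(a:=0)) k))" .
      show "A i k = (\<Sum>r\<in>insert a J. V' r i * cnj (V' r k))"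
      proof (cases "i = a \<or> k = a")
        case True
        then show ?thesis unfolding e using Aka Aak' i k by auto
      next
        case False
        then show ?thesis unfolding e using V i k by auto
      qed
    qed
  next
    case False
    then have \<alpha>pos: "\<alpha> > 0" using \<alpha>ge by simp
    define w where "w = (\<lambda>i. A i a / of_real (sqrt \<alpha>))"
    define B where "B = (\<lambda>i k. A i k - w i * cnj (w k))"
    have ww: "w i * cnj (w k) = A i a * A a k / of_real \<alpha>" if "k \<in> insert a J" for i k
    proof -
      have sq: "(of_real (sqrt \<alpha>) :: complex) * of_real (sqrt \<alpha>) = of_real \<alpha>"
        using \<alpha>ge by (simp flip: of_real_mult)
      have c: "cnj (A k a) = A a k" using hA[of a k] that by simp
      have "w i * cnj (w k) = A i a * cnj (A k a) / (of_real (sqrt \<alpha>) * of_real (sqrt \<alpha>))"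
        by (simp add: w_def)
      then show ?thesis unfolding sq c .
    qed
    have hJ: "hermitian_on J B"
      unfolding hermitian_on_def
    proof (intro ballI)
      fix i k assume "i \<in> J" "k \<in> J"
      then show "B k i = cnj (B i k)" unfolding B_def using hA[of i k] by simp
    qed
    have pJ: "psd_on J B"
      unfolding psd_on_def
    proof
      fix v :: "_ \<Rightarrow> complex"
      define \<beta> where "\<beta> = (\<Sum>k\<in>J. A a k * v k)"
      define v' where "v' = v(a := - \<beta> / of_real \<alpha>)"
      have s1: "(\<Sum>k\<in>J. A a k * v' k) = \<beta>"
        unfolding \<beta>_def v'_def using insert(2) by (intro sum.cong) auto
      have s2: "(\<Sum>i\<in>J. cnj (v' i) * A i a) = cnj \<beta>"
      proof -
        have "(\<Sum>i\<in>J. cnj (v' i) * A i a) = (\<Sum>i\<in>J. cnj (A a i * v i))"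
        proof (rule sum.cong[OF refl])
          fix i assume i: "i \<in> J"
          then have "v' i = v i" "A i a = cnj (A a i)" using insert(2) hA[of a i] by (auto simp: v'_def)
          then show "cnj (v' i) * A i a = cnj (A a i * v i)" by simp
        qed
        then show ?thesis unfolding \<beta>_def by simp
      qed
      have s3: "qf J A v' = qf J A v"
        unfolding qf_def v'_def using insert(2) by (intro sum.cong) auto
      have "qf (insert a J) A v' = cnj (v' a) * of_real \<alpha> * v' a + cnj (v' a) * \<beta> + cnj \<beta> * v' a + qf J A v"
        using qf_insert_split[OF insert(1,2), of A v'] s1 s2 s3 Aaa by simp
      also have "\<dots> = qf J A v - cnj \<beta> * \<beta> / of_real \<alpha>"
      proof -
        have va: "v' a = - \<beta> / of_real \<alpha>" by (simp add: v'_def)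
        have cva: "cnj (v' a) = - cnj \<beta> / of_real \<alpha>" by (simp add: va)
        have an: "(of_real \<alpha> :: complex) \<noteq> 0" using \<alpha>pos by simp
        show ?thesis unfolding va cva using an by (simp add: field_simps)
      qed
      also have "qf J A v - cnj \<beta> * \<beta> / of_real \<alpha> = qf J B v"
      proof -
        have "qf J B v = qf J A v - (\<Sum>i\<in>J. \<Sum>k\<in>J. cnj (v i) * (A i a * A a k / of_real \<alpha>) * v k)"
        proof -
          have "qf J B v = (\<Sum>i\<in>J. \<Sum>k\<in>J. cnj (v i) * A i k * v k - cnj (v i) * (A i a * A a k / of_real \<alpha>) * v k)"
            unfolding qf_def B_def by (intro sum.cong refl) (simp add: ww algebra_simps)
          then show ?thesis by (simp add: qf_def sum_subtractf)
        qed
        also have "(\<Sum>i\<in>J. \<Sum>k\<in>J. cnj (v i) * (A i a * A a k / of_real \<alpha>) * v k)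
            = (\<Sum>i\<in>J. cnj (v i) * A i a) * (\<Sum>k\<in>J. A a k * v k) / of_real \<alpha>"
        proof -
          have "(\<Sum>i\<in>J. cnj (v i) * A i a) * (\<Sum>k\<in>J. A a k * v k) / of_real \<alpha>
             = (\<Sum>i\<in>J. \<Sum>k\<in>J. cnj (v i) * A i a * (A a k * v k) / of_real \<alpha>)"
            by (simp add: sum_product sum_divide_distrib)
          then show ?thesis by (simp add: mult_ac)
        qed
        also have "(\<Sum>i\<in>J. cnj (v i) * A i a) = cnj \<beta>"
        proof -
          have "(\<Sum>i\<in>J. cnj (v i) * A i a) = (\<Sum>i\<in>J. cnj (A a i * v i))"
          proof (rule sum.cong[OF refl])
            fix i assume i: "i \<in> J"
            then have "A i a = cnj (A a i)" using hA[of a i] by auto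
            then show "cnj (v i) * A i a = cnj (A a i * v i)" by simp
          qed
          then show ?thesis unfolding \<beta>_def by simp
        qed
        finally show ?thesis by (simp add: \<beta>_def)
      qed
      finally show "0 \<le> Re (\<Sum>i\<in>J. \<Sum>k\<in>J. cnj (v i) * B i k * v k)"
        using psd_onD[OF psd, of v'] by (simp add: qf_def)
    qed
    obtain V where V: "\<forall>i\<in>J. \<forall>k\<in>J. B i k = (\<Sum>r\<in>J. V r i * cnj (V r k))"
      using insert.IH[OF hJ pJ] by blast
    define V' where "V' = (\<lambda>r. if r = a then w else (V r)(a := 0))"
    show ?thesis
    proof (intro exI ballI)
      fix i k assume i: "i \<in> insert a J" and k: "k \<in> insert a J"
      have "(\<Sum>r\<in>insert a J. V' r i * cnj (V' r k)) = w i * cnj (w k) + (\<Sum>r\<in>J. V' r i * cnj (V' r k))"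
        using insert(1,2) by (simp add: V'_def)
      also have "(\<Sum>r\<in>J. V' r i * cnj (V' r k)) = (\<Sum>r\<in>J. ((V r)(a:=0)) i * cnj (((V r)(a:=0)) k))"
        using insert(2) by (intro sum.cong) (auto simp: V'_def)
      finally have e: "(\<Sum>r\<in>insert a J. V' r i * cnj (V' r k)) = w i * cnj (w k) + (\<Sum>r\<in>J. ((V r)(a:=0)) i * cnj (((V r)(a:=0)) k))" .
      show "A i k = (\<Sum>r\<in>insert a J. V' r i * cnj (V' r k))"
      proof (cases "i = a \<or> k = a")
        case True
        have "A i k = w i * cnj (w k)"
        proof (cases "i = a")
          case True
          then show ?thesis using ww[OF k, of i] Aaa \<alpha>pos by simp
        next
          case False
          then have "k = a" using \<open>i = a \<or> k = a\<close> by simp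
          then show ?thesis using ww[OF k, of i] Aaa \<alpha>pos by simp
        qed
        then show ?thesis unfolding e using True by auto
      next
        case False
        then have ij: "i \<in> J" "k \<in> J" "i \<noteq> a" "k \<noteq> a" using i k by auto
        then have "A i k - w i * cnj (w k) = (\<Sum>r\<in>J. V r i * cnj (V r k))" using V by (simp add: B_def)
        then show ?thesis unfolding e using ij by (simp add: algebra_simps)
      qed
    qed
  qed
qed

lemma gfun_lower:
  assumes hyp: "\<forall>x\<in>Omega ns m. \<delta> \<le> gfun ns m H x"
  shows "\<delta> * (\<Prod>j<m. \<Sum>k<ns j. (cmod (y j k))\<^sup>2) \<le> gfun ns m H y"
proof (cases "\<exists>j<m. (\<Sum>k<ns j. (cmod (y j k))\<^sup>2) = 0")
  case True
  then obtain j where j: "j < m" "(\<Sum>k<ns j. (cmod (y j k))\<^sup>2) = 0" by blast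
  then have y0: "y j k = 0" if "k < ns j" for k
    using that by (simp add: sum_nonneg_eq_0_iff)
  have t0: "tensor_vec m y i = 0" if "i \<in> MI ns m" for i
  proof -
    have "i j < ns j" using that j by (simp add: MI_def)
    then have "y j (i j) = 0" using y0 by simp
    then show ?thesis unfolding tensor_vec_def using j by (intro prod_zero) auto
  qed
  have "gfun ns m H y = 0" unfolding gfun_def by (simp add: t0)
  moreover have "(\<Prod>j<m. \<Sum>k<ns j. (cmod (y j k))\<^sup>2) = 0" using j by (intro prod_zero) auto
  ultimately show ?thesis by (simp only:)
next
  case False
  define N where "N = (\<lambda>j. \<Sum>k<ns j. (cmod (y j k))\<^sup>2)"
  have Npos: "N j > 0" if "j < m" for j
    using False that unfolding N_def by (metis (no_types, lifting) order_less_le sum_nonneg zero_le_power2)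
  define x where "x = (\<lambda>j k. if j < m \<and> k < ns j then y j k / of_real (sqrt (N j)) else 0)"
  have xO: "x \<in> Omega ns m"
  proof -
    have "(\<Sum>k<ns j. (cmod (x j k))\<^sup>2) = 1" if j: "j < m" for j
    proof -
      have "(\<Sum>k<ns j. (cmod (x j k))\<^sup>2) = (\<Sum>k<ns j. (cmod (y j k))\<^sup>2 / N j)"
        using Npos[OF j] j by (intro sum.cong) (auto simp: x_def norm_divide power_divide)
      also have "\<dots> = 1" using Npos[OF j] by (simp add: N_def flip: sum_divide_distrib)
      finally show ?thesis .
    qed
    then show ?thesis by (auto simp: Omega_def x_def)
  qed
  define c where "c = (\<Prod>j<m. sqrt (N j))"
  have tv: "tensor_vec m y i = of_real c * tensor_vec m x i" if i: "i \<in> MI ns m" for i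
  proof -
    have "y j (i j) = of_real (sqrt (N j)) * x j (i j)" if j: "j < m" for j
    proof -
      have "i j < ns j" using i j by (simp add: MI_def)
      moreover have "sqrt (N j) \<noteq> 0" using Npos[OF j] by simp
      ultimately show ?thesis using j by (simp add: x_def)
    qed
    then have "tensor_vec m y i = (\<Prod>j<m. of_real (sqrt (N j)) * x j (i j))"
      unfolding tensor_vec_def by (intro prod.cong) auto
    also have "\<dots> = of_real c * tensor_vec m x i"
      by (simp add: prod.distrib c_def tensor_vec_def)
    finally show ?thesis .
  qed
  have cc: "c * c = (\<Prod>j<m. N j)"
    unfolding c_def prod.distrib[symmetric] using Npos by (intro prod.cong) (auto simp: less_imp_le)
  have "gfun ns m H y = Re (\<Sum>i\<in>MI ns m. \<Sum>l\<in>MI ns m.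
      of_real (c * c) * (cnj (tensor_vec m x i) * H i l * tensor_vec m x l))"
    unfolding gfun_def by (intro arg_cong[where f=Re] sum.cong refl) (simp add: tv algebra_simps)
  also have "\<dots> = (c * c) * gfun ns m H x"
    unfolding gfun_def by (simp add: sum_distrib_left[symmetric])
  finally have "gfun ns m H y = (\<Prod>j<m. N j) * gfun ns m H x" using cc by simp
  moreover have "(\<Prod>j<m. N j) \<ge> 0" using Npos by (intro prod_nonneg) (simp add: less_imp_le)
  moreover have "\<delta> \<le> gfun ns m H x" using hyp xO by blast
  ultimately show ?thesis unfolding N_def[symmetric]
    by (metis mult.commute mult_left_mono)
qed

lemma sum_swap4:
  "(\<Sum>i\<in>A. \<Sum>l\<in>B. \<Sum>k\<in>C. \<Sum>r\<in>D. f i l k r) = (\<Sum>k\<in>C. \<Sum>r\<in>D. \<Sum>i\<in>A. \<Sum>l\<in>B. f i l k r)"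
proof -
  have inner: "(\<Sum>l\<in>B. \<Sum>k\<in>C. \<Sum>r\<in>D. f i l k r) = (\<Sum>k\<in>C. \<Sum>r\<in>D. \<Sum>l\<in>B. f i l k r)" for i
  proof -
    have "(\<Sum>l\<in>B. \<Sum>k\<in>C. \<Sum>r\<in>D. f i l k r) = (\<Sum>k\<in>C. \<Sum>l\<in>B. \<Sum>r\<in>D. f i l k r)" by (rule sum.swap)
    also have "\<dots> = (\<Sum>k\<in>C. \<Sum>r\<in>D. \<Sum>l\<in>B. f i l k r)" by (intro sum.cong refl) (rule sum.swap)
    finally show ?thesis .
  qed
  have "(\<Sum>i\<in>A. \<Sum>l\<in>B. \<Sum>k\<in>C. \<Sum>r\<in>D. f i l k r) = (\<Sum>i\<in>A. \<Sum>k\<in>C. \<Sum>r\<in>D. \<Sum>l\<in>B. f i l k r)"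
    by (simp add: inner)
  also have "\<dots> = (\<Sum>k\<in>C. \<Sum>i\<in>A. \<Sum>r\<in>D. \<Sum>l\<in>B. f i l k r)" by (rule sum.swap)
  also have "\<dots> = (\<Sum>k\<in>C. \<Sum>r\<in>D. \<Sum>i\<in>A. \<Sum>l\<in>B. f i l k r)" by (intro sum.cong refl) (rule sum.swap)
  finally show ?thesis .
qed

lemma sep_lower:
  assumes hyp: "\<forall>x\<in>Omega ns m. \<delta> \<le> gfun ns m H x" and sep: "separable ns m \<rho>"
  shows "\<delta> \<le> Re (\<Sum>i\<in>MI ns m. \<Sum>l\<in>MI ns m. H i l * \<rho> l i)"
proof -
  obtain K :: nat and p :: "nat \<Rightarrow> real" and \<sigma> :: "nat \<Rightarrow> nat \<Rightarrow> nat \<Rightarrow> nat \<Rightarrow> complex" where p: "\<forall>k<K. 0 \<le> p k" "(\<Sum>k<K. p k) = 1"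
    and dens: "\<forall>k<K. \<forall>j<m. density_on {..<ns j} (\<sigma> k j)"
    and rho: "\<forall>i\<in>MI ns m. \<forall>l\<in>MI ns m. \<rho> i l = (\<Sum>k<K. complex_of_real (p k) * tensor_mat m (\<sigma> k) i l)"
    using sep unfolding separable_def by blast
  have "\<forall>k<K. \<forall>j<m. \<exists>V. \<forall>a\<in>{..<ns j}. \<forall>b\<in>{..<ns j}. \<sigma> k j a b = (\<Sum>r\<in>{..<ns j}. V r a * cnj (V r b))"
    using dens chol[of "{..<ns _}"] unfolding density_on_def by blast
  then obtain V where V: "\<And>k j a b. k < K \<Longrightarrow> j < m \<Longrightarrow> a < ns j \<Longrightarrow> b < ns j \<Longrightarrow>
      \<sigma> k j a b = (\<Sum>r<ns j. V k j r a * cnj (V k j r b))"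
    by (metis lessThan_iff)
  define N where "N = (\<lambda>k j r. \<Sum>a<ns j. (cmod (V k j r a))\<^sup>2)"
  have trN: "(\<Sum>r<ns j. N k j r) = 1" if k: "k < K" and j: "j < m" for k j
  proof -
    have "1 = (\<Sum>a<ns j. \<sigma> k j a a)"
      using dens k j by (simp add: density_on_def trace_on_def)
    also have "\<dots> = (\<Sum>a<ns j. \<Sum>r<ns j. complex_of_real ((cmod (V k j r a))\<^sup>2))"
    proof (intro sum.cong refl)
      fix a assume a: "a \<in> {..<ns j}"
      have "\<sigma> k j a a = (\<Sum>r<ns j. V k j r a * cnj (V k j r a))" using V[OF k j] a by simp
      also have "\<dots> = (\<Sum>r<ns j. complex_of_real ((cmod (V k j r a))\<^sup>2))" by (simp only: complex_norm_square)
      finally show "\<sigma> k j a a = (\<Sum>r<ns j. complex_of_real ((cmod (V k j r a))\<^sup>2))" .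
    qed
    also have "\<dots> = complex_of_real (\<Sum>r<ns j. N k j r)"
      unfolding N_def of_real_sum by (rule sum.swap)
    finally show ?thesis by (metis of_real_eq_1_iff)
  qed
  define R where "R = PiE {..<m} (\<lambda>j. {..<ns j})"
  define t where "t = (\<lambda>k r i. tensor_vec m (\<lambda>j a. V k j (r j) a) i)"
  have rho2: "\<rho> l i = (\<Sum>k<K. complex_of_real (p k) * (\<Sum>r\<in>R. t k r l * cnj (t k r i)))"
    if l: "l \<in> MI ns m" and i: "i \<in> MI ns m" for l i
  proof -
    have "\<rho> l i = (\<Sum>k<K. complex_of_real (p k) * tensor_mat m (\<sigma> k) l i)" using rho l i by blast
    also have "\<dots> = (\<Sum>k<K. complex_of_real (p k) * (\<Sum>r\<in>R. t k r l * cnj (t k r i)))"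
    proof (intro sum.cong refl arg_cong2[where f="(*)"])
      fix k assume k: "k \<in> {..<K}"
      have "tensor_mat m (\<sigma> k) l i = (\<Prod>j<m. \<Sum>r<ns j. V k j r (l j) * cnj (V k j r (i j)))"
        unfolding tensor_mat_def using l i k by (intro prod.cong refl V) (auto simp: MI_def)
      also have "\<dots> = (\<Sum>r\<in>R. \<Prod>j<m. V k j (r j) (l j) * cnj (V k j (r j) (i j)))"
        unfolding R_def by (rule prod_sum_PiE) auto
      also have "\<dots> = (\<Sum>r\<in>R. t k r l * cnj (t k r i))"
        by (simp add: t_def tensor_vec_def prod.distrib)
      finally show "tensor_mat m (\<sigma> k) l i = (\<Sum>r\<in>R. t k r l * cnj (t k r i))" .
    qed
    finally show ?thesis .
  qed
  have "(\<Sum>i\<in>MI ns m. \<Sum>l\<in>MI ns m. H i l * \<rho> l i)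
      = (\<Sum>i\<in>MI ns m. \<Sum>l\<in>MI ns m. \<Sum>k<K. \<Sum>r\<in>R. complex_of_real (p k) * (cnj (t k r i) * H i l * t k r l))"
    using rho2 by (intro sum.cong refl) (simp add: sum_distrib_left algebra_simps)
  also have "\<dots> = (\<Sum>k<K. \<Sum>r\<in>R. \<Sum>i\<in>MI ns m. \<Sum>l\<in>MI ns m. complex_of_real (p k) * (cnj (t k r i) * H i l * t k r l))"
    by (rule sum_swap4)
  also have "\<dots> = (\<Sum>k<K. \<Sum>r\<in>R. complex_of_real (p k) * (\<Sum>i\<in>MI ns m. \<Sum>l\<in>MI ns m. cnj (t k r i) * H i l * t k r l))"
    by (simp add: sum_distrib_left)
  finally have S: "Re (\<Sum>i\<in>MI ns m. \<Sum>l\<in>MI ns m. H i l * \<rho> l i)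
      = (\<Sum>k<K. \<Sum>r\<in>R. p k * gfun ns m H (\<lambda>j a. V k j (r j) a))"
    by (simp add: Re_sum gfun_def t_def)
  have "(\<Sum>k<K. \<Sum>r\<in>R. p k * (\<delta> * (\<Prod>j<m. N k j (r j)))) \<le> (\<Sum>k<K. \<Sum>r\<in>R. p k * gfun ns m H (\<lambda>j a. V k j (r j) a))"
  proof (intro sum_mono mult_left_mono)
    fix k r assume k: "k \<in> {..<K}"
    show "0 \<le> p k" using p k by simp
    show "\<delta> * (\<Prod>j<m. N k j (r j)) \<le> gfun ns m H (\<lambda>j a. V k j (r j) a)"
      using gfun_lower[OF hyp, of "\<lambda>j a. V k j (r j) a"] by (simp add: N_def)
  qed
  moreover have "(\<Sum>k<K. \<Sum>r\<in>R. p k * (\<delta> * (\<Prod>j<m. N k j (r j)))) = \<delta>"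
  proof -
    have "(\<Sum>r\<in>R. (\<Prod>j<m. N k j (r j))) = 1" if k: "k < K" for k
    proof -
      have "(\<Sum>r\<in>R. (\<Prod>j<m. N k j (r j))) = (\<Prod>j<m. \<Sum>r<ns j. N k j r)"
        unfolding R_def by (rule prod_sum_PiE[symmetric]) auto
      also have "\<dots> = 1" using trN[OF k] by simp
      finally show ?thesis .
    qed
    then have "(\<Sum>k<K. \<Sum>r\<in>R. p k * (\<delta> * (\<Prod>j<m. N k j (r j)))) = (\<Sum>k<K. p k * \<delta>)"
      by (simp add: sum_distrib_left[symmetric] mult.assoc)
    also have "\<dots> = \<delta>" using p by (simp add: sum_distrib_right[symmetric])
    finally show ?thesis .
  qed
  ultimately show ?thesis using S by simp
qed

lemma cont_coord1: "continuous_on S (\<lambda>x::'i \<Rightarrow> 'c::topological_space. x i)"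
  by (rule continuous_on_subset[OF continuous_on_product_coordinates subset_UNIV])

lemma cont_app: "continuous_on S f \<Longrightarrow> continuous_on S (\<lambda>x. f x i)"
  for f :: "'a::topological_space \<Rightarrow> 'b \<Rightarrow> 'c::topological_space"
  by (rule continuous_on_compose2[OF continuous_on_product_coordinates _ subset_UNIV])

lemma cont_coord2: "continuous_on S (\<lambda>x::'i \<Rightarrow> 'j \<Rightarrow> 'c::topological_space. x j k)"
  by (rule cont_app[OF cont_coord1])

lemma cont_tv: "continuous_on S (\<lambda>x. tensor_vec m x i)"
  unfolding tensor_vec_def by (rule continuous_on_prod) (rule cont_coord2)

lemma cont_gfun: "continuous_on S (gfun ns m G)"
  unfolding gfun_def
  by (intro continuous_on_Re continuous_on_sum continuous_on_mult continuous_on_cnj cont_tv continuous_on_const)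

lemma compact_box: "(\<And>i. compact (B i)) \<Longrightarrow> compact (PiE UNIV B)"
  for B :: "'i \<Rightarrow> 'c::topological_space set"
  using compactin_PiE[of "\<lambda>_. euclidean" UNIV B] by (simp add: euclidean_product_topology)

lemma closed_imp_const: "closed {x. Q x} \<Longrightarrow> closed {x. P \<longrightarrow> Q x}"
  by (cases P) auto

lemma Omega_alt: "Omega ns m = {x. \<forall>j k. (j < m \<longrightarrow> (\<Sum>k<ns j. (cmod (x j k))\<^sup>2) = 1) \<and>
    (\<not> (j < m \<and> k < ns j) \<longrightarrow> x j k = 0)}"
proof (rule set_eqI)
  fix x :: "nat \<Rightarrow> nat \<Rightarrow> complex"
  show "x \<in> Omega ns m \<longleftrightarrow> x \<in> {x. \<forall>j k. (j < m \<longrightarrow> (\<Sum>k<ns j. (cmod (x j k))\<^sup>2) = 1) \<and>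
    (\<not> (j < m \<and> k < ns j) \<longrightarrow> x j k = 0)}"
  proof
    assume x: "x \<in> Omega ns m"
    show "x \<in> {x. \<forall>j k. (j < m \<longrightarrow> (\<Sum>k<ns j. (cmod (x j k))\<^sup>2) = 1) \<and>
    (\<not> (j < m \<and> k < ns j) \<longrightarrow> x j k = 0)}"
    proof (intro CollectI allI conjI impI)
      fix j k
      show "j < m \<Longrightarrow> (\<Sum>k<ns j. (cmod (x j k))\<^sup>2) = 1" using x by (simp add: Omega_def)
      assume "\<not> (j < m \<and> k < ns j)"
      then consider "j < m" "ns j \<le> k" | "m \<le> j" by linarith
      then show "x j k = 0" using x unfolding Omega_def by cases blast+
    qed
  next
    assume x: "x \<in> {x. \<forall>j k. (j < m \<longrightarrow> (\<Sum>k<ns j. (cmod (x j k))\<^sup>2) = 1) \<and>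
    (\<not> (j < m \<and> k < ns j) \<longrightarrow> x j k = 0)}"
    then show "x \<in> Omega ns m" unfolding Omega_def by auto
  qed
qed

lemma closed_Omega: "closed (Omega ns m)"
  unfolding Omega_alt
  by (intro closed_Collect_all closed_Collect_conj closed_imp_const closed_Collect_eq
      continuous_on_sum continuous_on_power continuous_on_norm cont_coord2 continuous_on_const)

lemma Omega_sub_box: "Omega ns m \<subseteq> PiE UNIV (\<lambda>j. PiE UNIV (\<lambda>k. if j < m \<and> k < ns j then cball 0 1 else {0}))"
proof
  fix x assume x: "x \<in> Omega ns m"
  have "cmod (x j k) \<le> 1" if "j < m" "k < ns j" for j k
  proof -
    have "(cmod (x j k))\<^sup>2 \<le> (\<Sum>k<ns j. (cmod (x j k))\<^sup>2)"
      using that by (intro member_le_sum) auto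
    also have "\<dots> = 1" using x that by (simp add: Omega_def)
    finally show ?thesis by (simp add: power_le_one_iff abs_le_square_iff)
  qed
  then show "x \<in> PiE UNIV (\<lambda>j. PiE UNIV (\<lambda>k. if j < m \<and> k < ns j then cball 0 1 else {0}))"
  proof (intro PiE_I)
    fix j k
    have "(\<not> (j < m \<and> k < ns j) \<longrightarrow> x j k = 0)" using x unfolding Omega_alt by blast
    then show "x j k \<in> (if j < m \<and> k < ns j then cball 0 1 else {0})"
      using \<open>\<And>j k. j < m \<Longrightarrow> k < ns j \<Longrightarrow> cmod (x j k) \<le> 1\<close>[of j k] by auto
  qed auto
qed

lemma compact_Omega: "compact (Omega ns m)"
proof -
  have "compact (PiE UNIV (\<lambda>j. PiE UNIV (\<lambda>k. if j < m \<and> k < ns j then cball (0::complex) 1 else {0})))"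
  proof (intro compact_box)
    fix j k
    show "compact (if j < m \<and> k < ns j then cball (0::complex) 1 else {0})" by simp
  qed
  then have "compact (PiE UNIV (\<lambda>j. PiE UNIV (\<lambda>k. if j < m \<and> k < ns j then cball (0::complex) 1 else {0})) \<inter> Omega ns m)"
    using closed_Omega by (rule compact_Int_closed)
  moreover have "PiE UNIV (\<lambda>j. PiE UNIV (\<lambda>k. if j < m \<and> k < ns j then cball (0::complex) 1 else {0})) \<inter> Omega ns m = Omega ns m"
    using Omega_sub_box by (rule Int_absorb1)
  ultimately show ?thesis by simp
qed

lemma Omega_nonempty:
  assumes "\<forall>j<m. 0 < ns j"
  shows "(\<lambda>j k. if j < m \<and> k = 0 then 1 else 0) \<in> Omega ns m"
proof -
  have "(\<Sum>k<ns j. (cmod (if j < m \<and> k = 0 then 1 else 0))\<^sup>2) = 1" if "j < m" for j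
  proof -
    have "(\<Sum>k<ns j. (cmod (if j < m \<and> k = 0 then 1 else 0))\<^sup>2) = (\<Sum>k<ns j. if k = 0 then 1 else 0)"
      using that by (intro sum.cong) auto
    also have "\<dots> = 1" using assms that by simp
    finally show ?thesis .
  qed
  then show ?thesis using assms unfolding Omega_def by simp
qed

lemma gfun_bounded: "bounded (gfun ns m G ` Omega ns m)"
  by (intro compact_imp_bounded compact_continuous_image cont_gfun compact_Omega)

lemma lin_dep:
  fixes v :: "'k \<Rightarrow> 'c \<Rightarrow> real"
  assumes "finite F"
  shows "finite S \<Longrightarrow> card F < card S \<Longrightarrow> \<exists>\<mu>. (\<exists>k\<in>S. \<mu> k \<noteq> 0) \<and> (\<forall>c\<in>F. (\<Sum>k\<in>S. \<mu> k * v k c) = 0)"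
  using assms
proof (induction F arbitrary: S v rule: finite_induct)
  case empty
  then obtain k0 where "k0 \<in> S" by fastforce
  then show ?case by (intro exI[of _ "\<lambda>k. 1"]) auto
next
  case (insert a F S v)
  show ?case
  proof (cases "\<forall>k\<in>S. v k a = 0")
    case True
    have "card F < card S" using insert by simp
    then obtain \<mu> where \<mu>: "\<exists>k\<in>S. \<mu> k \<noteq> 0" "\<forall>c\<in>F. (\<Sum>k\<in>S. \<mu> k * v k c) = 0"
      using insert.IH[OF insert.prems(1)] by blast
    then show ?thesis using True by (intro exI[of _ \<mu>]) auto
  next
    case False
    then obtain k0 where k0: "k0 \<in> S" "v k0 a \<noteq> 0" by blast
    define S' where "S' = S - {k0}"
    define v' where "v' = (\<lambda>k c. v k c - (v k a / v k0 a) * v k0 c)"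
    have finS': "finite S'" using insert.prems by (simp add: S'_def)
    have cS': "card F < card S'" using insert.prems k0 insert(1,2) by (simp add: S'_def)
    obtain \<mu>' where \<mu>': "\<exists>k\<in>S'. \<mu>' k \<noteq> 0" "\<forall>c\<in>F. (\<Sum>k\<in>S'. \<mu>' k * v' k c) = 0"
      using insert.IH[OF finS' cS', of v'] by blast
    define \<mu> where "\<mu> = \<mu>'(k0 := - (\<Sum>k\<in>S'. \<mu>' k * v k a) / v k0 a)"
    have key: "(\<Sum>k\<in>S. \<mu> k * v k c) = (\<Sum>k\<in>S'. \<mu>' k * v' k c)" for c
    proof -
      have "(\<Sum>k\<in>S. \<mu> k * v k c) = \<mu> k0 * v k0 c + (\<Sum>k\<in>S'. \<mu> k * v k c)"
        unfolding S'_def using k0 insert.prems(1) by (simp add: sum.remove)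
      also have "(\<Sum>k\<in>S'. \<mu> k * v k c) = (\<Sum>k\<in>S'. \<mu>' k * v k c)"
        by (intro sum.cong) (auto simp: \<mu>_def S'_def)
      also have "(\<Sum>k\<in>S'. \<mu>' k * v' k c) = (\<Sum>k\<in>S'. \<mu>' k * v k c) - (\<Sum>k\<in>S'. \<mu>' k * v k a) / v k0 a * v k0 c"
        unfolding v'_def by (simp add: right_diff_distrib sum_subtractf sum_distrib_right sum_divide_distrib mult.assoc)
      ultimately show ?thesis by (simp add: \<mu>_def)
    qed
    show ?thesis
    proof (intro exI[of _ \<mu>] conjI ballI)
      show "\<exists>k\<in>S. \<mu> k \<noteq> 0" using \<mu>'(1) by (auto simp: \<mu>_def S'_def)
      fix c assume c: "c \<in> insert a F"
      show "(\<Sum>k\<in>S. \<mu> k * v k c) = 0"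
      proof (cases "c = a")
        case True
        have "(\<Sum>k\<in>S'. \<mu>' k * v' k a) = 0" using k0 by (simp add: v'_def)
        then show ?thesis using key True by simp
      next
        case False
        then show ?thesis using key \<mu>'(2) c by simp
      qed
    qed
  qed
qed

lemma cara_step:
  fixes v :: "'k \<Rightarrow> 'c \<Rightarrow> real" and p :: "'k \<Rightarrow> real"
  assumes F: "finite F" and S: "finite S" and cS: "card F + 1 < card S"
    and p0: "\<forall>k\<in>S. 0 \<le> p k" and p1: "(\<Sum>k\<in>S. p k) = 1"
  shows "\<exists>p' k0. k0 \<in> S \<and> p' k0 = 0 \<and> (\<forall>k\<in>S. 0 \<le> p' k) \<and> (\<Sum>k\<in>S. p' k) = 1 \<and>
     (\<forall>c\<in>F. (\<Sum>k\<in>S. p' k * v k c) = (\<Sum>k\<in>S. p k * v k c))"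
proof -
  define F' where "F' = insert None (Some ` F)"
  define v' where "v' = (\<lambda>k c. case c of None \<Rightarrow> 1 | Some c \<Rightarrow> v k c)"
  have "finite F'" using F by (simp add: F'_def)
  moreover have "card F' < card S"
    using cS F by (simp add: F'_def card_image)
  ultimately obtain \<mu> where \<mu>: "\<exists>k\<in>S. \<mu> k \<noteq> 0" "\<forall>c\<in>F'. (\<Sum>k\<in>S. \<mu> k * v' k c) = 0"
    using lin_dep[of F' S v'] S by blast
  have s0: "(\<Sum>k\<in>S. \<mu> k) = 0" using \<mu>(2) by (simp add: F'_def v'_def)
  have sv: "(\<Sum>k\<in>S. \<mu> k * v k c) = 0" if "c \<in> F" for c
    using \<mu>(2) that by (simp add: F'_def v'_def)
  define P where "P = {k\<in>S. \<mu> k > 0}"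
  have Pne: "P \<noteq> {}"
  proof
    assume "P = {}"
    then have le: "\<forall>k\<in>S. \<mu> k \<le> 0" by (auto simp: P_def not_less)
    then have "\<forall>k\<in>S. - \<mu> k = 0" using sum_nonneg_eq_0_iff[OF S, of "\<lambda>k. - \<mu> k"] s0 by (simp add: sum_negf)
    then show False using \<mu>(1) by force
  qed
  have finP: "finite P" using S by (simp add: P_def)
  define f where "f = (\<lambda>k. p k / \<mu> k)"
  define k0 where "k0 = arg_min_on f P"
  have k0P: "k0 \<in> P" unfolding k0_def by (rule arg_min_if_finite(1)[OF finP Pne])
  have k0min: "f k0 \<le> f k" if "k \<in> P" for k
    using arg_min_if_finite(2)[OF finP Pne, of f] that by (auto simp: k0_def not_less)
  define t where "t = f k0"
  have t0: "t \<ge> 0" using k0P p0 by (simp add: t_def f_def P_def)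
  define p' where "p' = (\<lambda>k. p k - t * \<mu> k)"
  show ?thesis
  proof (intro exI[of _ p'] exI[of _ k0] conjI ballI)
    show "k0 \<in> S" using k0P by (simp add: P_def)
    show "p' k0 = 0" using k0P by (simp add: p'_def t_def f_def P_def)
    fix k assume k: "k \<in> S"
    show "0 \<le> p' k"
    proof (cases "\<mu> k > 0")
      case True
      then have "t \<le> p k / \<mu> k" using k0min[of k] k by (simp add: t_def f_def P_def)
      then have "t * \<mu> k \<le> p k" using True by (simp add: le_divide_eq)
      then show ?thesis by (simp add: p'_def)
    next
      case False
      then have "t * \<mu> k \<le> 0" using t0 by (simp add: mult_nonneg_nonpos)
      moreover have "0 \<le> p k" using p0 k by simp
      ultimately show ?thesis by (simp add: p'_def)
    qed
  next
    show "(\<Sum>k\<in>S. p' k) = 1"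
      using p1 s0 by (simp add: p'_def sum_subtractf sum_distrib_left[symmetric])
  next
    fix c assume c: "c \<in> F"
    have "(\<Sum>k\<in>S. p' k * v k c) = (\<Sum>k\<in>S. p k * v k c) - t * (\<Sum>k\<in>S. \<mu> k * v k c)"
      by (simp add: p'_def left_diff_distrib sum_subtractf sum_distrib_left mult.assoc)
    then show "(\<Sum>k\<in>S. p' k * v k c) = (\<Sum>k\<in>S. p k * v k c)" using sv[OF c] by simp
  qed
qed

definition sw :: "nat \<Rightarrow> nat \<Rightarrow> nat \<Rightarrow> nat" where
  "sw k0 K k = (if k = k0 then K else if k = K then k0 else k)"

lemma sum_sw:
  fixes g :: "nat \<Rightarrow> 'b::comm_monoid_add"
  assumes "k0 \<le> K" "g k0 = 0"
  shows "(\<Sum>k<K. g (sw k0 K k)) = (\<Sum>k\<in>{..K}. g k)"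
proof -
  have "(\<Sum>k\<in>{..K}. g k) = (\<Sum>k\<in>{..K}. g (sw k0 K k))"
    by (rule sum.reindex_bij_witness[of _ "sw k0 K" "sw k0 K"]) (use assms in \<open>auto simp: sw_def\<close>)
  also have "\<dots> = (\<Sum>k<K. g (sw k0 K k)) + g (sw k0 K K)"
    by (simp add: lessThan_Suc_atMost[symmetric])
  also have "g (sw k0 K K) = 0" using assms by (simp add: sw_def)
  finally show ?thesis by simp
qed

lemma sw_le: "k \<le> K \<Longrightarrow> k0 \<le> K \<Longrightarrow> sw k0 K k \<le> K"
  by (simp add: sw_def)

lemma sq_expand:
  fixes W e :: "'c \<Rightarrow> real"
  shows "(\<Sum>c\<in>F. (W c + t * e c)\<^sup>2) = (\<Sum>c\<in>F. (W c)\<^sup>2) + 2 * t * (\<Sum>c\<in>F. W c * e c) + t\<^sup>2 * (\<Sum>c\<in>F. (e c)\<^sup>2)"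
proof -
  have "(\<Sum>c\<in>F. (W c + t * e c)\<^sup>2) = (\<Sum>c\<in>F. (W c)\<^sup>2 + 2 * t * (W c * e c) + t\<^sup>2 * (e c)\<^sup>2)"
    by (intro sum.cong refl) (simp add: power2_eq_square algebra_simps)
  also have "\<dots> = (\<Sum>c\<in>F. (W c)\<^sup>2) + 2 * t * (\<Sum>c\<in>F. W c * e c) + t\<^sup>2 * (\<Sum>c\<in>F. (e c)\<^sup>2)"
    by (simp add: sum.distrib sum_distrib_left)
  finally show ?thesis .
qed

lemma conv_sep:
  fixes Om :: "'a::topological_space set" and \<phi> :: "'a \<Rightarrow> 'c \<Rightarrow> real" and z :: "'c \<Rightarrow> real"
  assumes Om: "compact Om" "x0 \<in> Om" and F: "finite F"
    and cont: "\<And>c. c \<in> F \<Longrightarrow> continuous_on Om (\<lambda>x. \<phi> x c)"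
    and hyp: "\<And>w c0. (\<forall>x\<in>Om. c0 \<le> (\<Sum>c\<in>F. w c * \<phi> x c)) \<Longrightarrow> c0 \<le> (\<Sum>c\<in>F. w c * z c)"
  shows "\<exists>(K::nat) p X. (\<forall>k<K. 0 \<le> p k) \<and> (\<Sum>k<K. p k) = 1 \<and> (\<forall>k<K. X k \<in> Om) \<and>
            (\<forall>c\<in>F. z c = (\<Sum>k<K. p k * \<phi> (X k) c))"
proof -
  define K where "K = card F + 1"
  define Dl :: "(nat \<Rightarrow> real) set" where "Dl = PiE UNIV (\<lambda>k. if k < K then {0..1::real} else {0}) \<inter> {p. (\<Sum>k<K. p k) = 1}"
  define XS where "XS = PiE UNIV (\<lambda>k. if k < K then Om else {x0})"
  define PP where "PP = Dl \<times> XS"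
  define comb where "comb = (\<lambda>(p::nat\<Rightarrow>real) X c. (\<Sum>k<K. p k * \<phi> (X k) c))"
  define \<psi> where "\<psi> = (\<lambda>pX. \<Sum>c\<in>F. (comb (fst pX) (snd pX) c - z c)\<^sup>2)"
  have cDl: "compact Dl"
  proof -
    have "compact (PiE UNIV (\<lambda>k. if k < K then {0..1::real} else {0}))"
      by (intro compact_box) simp
    moreover have "closed {p::nat\<Rightarrow>real. (\<Sum>k<K. p k) = 1}"
      by (intro closed_Collect_eq continuous_on_sum cont_coord1 continuous_on_const)
    ultimately show ?thesis unfolding Dl_def by (rule compact_Int_closed)
  qed
  have cXS: "compact XS" unfolding XS_def
    by (intro compact_box) (simp add: Om)
  have cPP: "compact PP" unfolding PP_def using cDl cXS by (rule compact_Times)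
  have XSmem: "X k \<in> Om" if "X \<in> XS" for X k
  proof -
    have "X k \<in> (if k < K then Om else {x0})" using that unfolding XS_def by (rule PiE_mem) simp
    then show ?thesis using Om(2) by (cases "k < K") auto
  qed
  have DLmem: "0 \<le> p k" "(\<Sum>k<K. p k) = 1" if "p \<in> Dl" for p k
  proof -
    have "p k \<in> (if k < K then {0..1} else {0})" using that unfolding Dl_def by (intro PiE_mem[of p UNIV]) auto
    then show "0 \<le> p k" by (cases "k < K") auto
    show "(\<Sum>k<K. p k) = 1" using that unfolding Dl_def by simp
  qed
  have DLle: "p k \<le> 1" if "p \<in> Dl" for p k
  proof -
    have "p k \<in> (if k < K then {0..1} else {0})" using that unfolding Dl_def by (intro PiE_mem[of p UNIV]) auto
    then show "p k \<le> 1" by (cases "k < K") auto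
  qed
  have Kpos: "0 < K" by (simp add: K_def)
  have PPne: "PP \<noteq> {}"
  proof -
    have "(\<lambda>k. if k = 0 then 1 else 0) \<in> Dl"
      unfolding Dl_def using Kpos by auto
    moreover have "(\<lambda>_. x0) \<in> XS" unfolding XS_def using Om(2) by auto
    ultimately show ?thesis unfolding PP_def by blast
  qed
  have cpsi: "continuous_on PP \<psi>"
  proof -
    have c1: "continuous_on PP (\<lambda>pX. fst pX k)" for k
      by (rule cont_app[OF continuous_on_fst[OF continuous_on_id]])
    have c2: "continuous_on PP (\<lambda>pX. \<phi> (snd pX k) c)" if "c \<in> F" for k c
    proof (rule continuous_on_compose2[OF cont[OF that]])
      show "continuous_on PP (\<lambda>pX. snd pX k)"
        by (rule cont_app[OF continuous_on_snd[OF continuous_on_id]])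
      show "(\<lambda>pX. snd pX k) ` PP \<subseteq> Om" using XSmem unfolding PP_def by auto
    qed
    show ?thesis unfolding \<psi>_def comb_def
      by (intro continuous_on_sum continuous_on_power continuous_on_diff continuous_on_mult
          c1 c2 continuous_on_const) 
  qed
  obtain pX where pX: "pX \<in> PP" and pXmin: "\<forall>y\<in>PP. \<psi> pX \<le> \<psi> y"
    using continuous_attains_inf[OF cPP PPne cpsi] by (rule bexE)
  define p where "p = fst pX"
  define X where "X = snd pX"
  have pD: "p \<in> Dl" and XX: "X \<in> XS" using pX unfolding PP_def p_def X_def mem_Times_iff by blast+
  show ?thesis
  proof (cases "\<forall>c\<in>F. comb p X c = z c")
    case True
    have "(\<forall>k<K. 0 \<le> p k) \<and> (\<Sum>k<K. p k) = 1 \<and> (\<forall>k<K. X k \<in> Om) \<and> (\<forall>c\<in>F. z c = (\<Sum>k<K. p k * \<phi> (X k) c))"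
    proof (intro conjI)
      show "\<forall>k<K. 0 \<le> p k" using DLmem(1)[OF pD] by blast
      show "(\<Sum>k<K. p k) = 1" using DLmem(2)[OF pD] .
      show "\<forall>k<K. X k \<in> Om" using XSmem[OF XX] by blast
      show "\<forall>c\<in>F. z c = (\<Sum>k<K. p k * \<phi> (X k) c)" using True unfolding comb_def by simp
    qed
    then show ?thesis by (intro exI)
  next
    case False
    then obtain c1 where c1: "c1 \<in> F" "comb p X c1 \<noteq> z c1" by blast
    define q where "q = comb p X"
    define W where "W = (\<lambda>c. q c - z c)"
    define nW where "nW = (\<Sum>c\<in>F. (W c)\<^sup>2)"
    have psiPX: "\<psi> pX = nW" by (simp add: \<psi>_def nW_def W_def q_def p_def X_def)
    have nWpos: "nW > 0" unfolding nW_def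
      by (rule sum_pos2[OF F c1(1)]) (use c1(2) in \<open>auto simp: W_def q_def\<close>)
    define c0 where "c0 = (\<Sum>c\<in>F. W c * q c) - nW / 2"
    have Wz: "(\<Sum>c\<in>F. W c * z c) = (\<Sum>c\<in>F. W c * q c) - nW"
    proof -
      have "(\<Sum>c\<in>F. W c * z c) = (\<Sum>c\<in>F. W c * q c - (W c)\<^sup>2)"
        by (intro sum.cong refl) (simp add: W_def power2_eq_square algebra_simps)
      then show ?thesis by (simp add: sum_subtractf nW_def)
    qed
    have "\<not> (c0 \<le> (\<Sum>c\<in>F. W c * z c))" using nWpos by (simp add: Wz c0_def)
    then obtain x where x: "x \<in> Om" "(\<Sum>c\<in>F. W c * \<phi> x c) < c0"
      using hyp[of c0 W] by (meson not_le)
    define e where "e = (\<lambda>c. \<phi> x c - q c)"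
    define B where "B = (\<Sum>c\<in>F. (e c)\<^sup>2)"
    define d where "d = (\<Sum>c\<in>F. W c * e c)"
    have B0: "B \<ge> 0" unfolding B_def by (intro sum_nonneg) simp
    have d_lt: "d < - nW / 2"
    proof -
      have "d = (\<Sum>c\<in>F. W c * \<phi> x c) - (\<Sum>c\<in>F. W c * q c)"
        unfolding d_def e_def by (simp add: right_diff_distrib sum_subtractf)
      then show ?thesis using x(2) by (simp add: c0_def)
    qed
    define t where "t = min 1 (nW / (2 * (B + 1)))"
    have t0: "t > 0" using nWpos B0 by (simp add: t_def)
    have t1: "t \<le> 1" by (simp add: t_def)
    have tB: "t * B \<le> nW / 2"
    proof -
      have "t * B \<le> t * (B + 1)" using t0 by simp
      also have "t * (B + 1) \<le> nW / (2 * (B + 1)) * (B + 1)"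
        using B0 by (intro mult_right_mono) (simp_all add: t_def)
      also have "\<dots> = nW / 2" using B0 by (simp add: field_simps)
      finally show ?thesis .
    qed
    have newlt: "(\<Sum>c\<in>F. (W c + t * e c)\<^sup>2) < nW"
    proof -
      have "(\<Sum>c\<in>F. (W c + t * e c)\<^sup>2) = nW + 2 * t * d + t\<^sup>2 * B"
        unfolding nW_def d_def B_def by (rule sq_expand)
      also have "t\<^sup>2 * B = t * (t * B)" by (simp add: power2_eq_square)
      also have "t * (t * B) \<le> t * (nW / 2)" using tB t0 by simp
      also have "2 * t * d < t * (- nW)"
      proof -
        have "2 * d < - nW" using d_lt by simp
        from mult_strict_left_mono[OF this t0] show ?thesis by (simp add: mult_ac)
      qed
      finally show ?thesis using mult_pos_pos[OF nWpos t0] by (simp add: algebra_simps)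
    qed
    define p2 where "p2 = (\<lambda>k. if k < K then (1 - t) * p k else if k = K then t else 0)"
    define X2 where "X2 = X(K := x)"
    have X2Om: "X2 j \<in> Om" for j using XSmem[OF XX] x(1) by (simp add: X2_def)
    have cS: "card F + 1 < card {..K}" by (simp add: K_def)
    have p2nn: "\<forall>k\<in>{..K}. 0 \<le> p2 k" using DLmem(1)[OF pD] t0 t1 by (simp add: p2_def)
    have sumK: "(\<Sum>k\<in>{..K}. g k) = (\<Sum>k<K. g k) + g K" for g :: "nat \<Rightarrow> real"
      by (simp add: lessThan_Suc_atMost[symmetric])
    have p2s: "(\<Sum>k\<in>{..K}. p2 k) = 1"
    proof -
      have "(\<Sum>k<K. p2 k) = (\<Sum>k<K. (1 - t) * p k)" by (intro sum.cong) (auto simp: p2_def)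
      also have "\<dots> = 1 - t" using DLmem(2)[OF pD] by (simp add: sum_distrib_left[symmetric])
      finally show ?thesis by (simp add: sumK p2_def)
    qed
    have p2c: "(\<Sum>k\<in>{..K}. p2 k * \<phi> (X2 k) c) = (1 - t) * q c + t * \<phi> x c" for c
    proof -
      have "(\<Sum>k<K. p2 k * \<phi> (X2 k) c) = (\<Sum>k<K. (1 - t) * (p k * \<phi> (X k) c))"
        by (intro sum.cong) (auto simp: p2_def X2_def)
      also have "\<dots> = (1 - t) * q c" by (simp add: sum_distrib_left[symmetric] q_def comb_def)
      finally show ?thesis by (simp add: sumK p2_def X2_def)
    qed
    obtain p' k0 where k0: "k0 \<in> {..K}" "p' k0 = 0" and p'nn: "\<forall>k\<in>{..K}. 0 \<le> p' k"
      and p's: "(\<Sum>k\<in>{..K}. p' k) = 1"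
      and p'c: "\<forall>c\<in>F. (\<Sum>k\<in>{..K}. p' k * \<phi> (X2 k) c) = (\<Sum>k\<in>{..K}. p2 k * \<phi> (X2 k) c)"
      using cara_step[OF F _ cS p2nn p2s, of "\<lambda>k c. \<phi> (X2 k) c"] by auto
    define p3 where "p3 = (\<lambda>k. if k < K then p' (sw k0 K k) else 0)"
    define X3 where "X3 = (\<lambda>k. if k < K then X2 (sw k0 K k) else x0)"
    have swin: "sw k0 K k \<in> {..K}" if "k < K" for k using sw_le[of k K k0] that k0(1) by simp
    have p3D: "p3 \<in> Dl"
    proof -
      have "p3 \<in> PiE UNIV (\<lambda>k. if k < K then {0..1::real} else {0})"
      proof (rule PiE_I)
        fix k :: nat
        show "p3 k \<in> (if k < K then {0..1} else {0})"
        proof (cases "k < K")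
          case True
          have "p' (sw k0 K k) \<le> (\<Sum>k\<in>{..K}. p' k)"
            using swin[OF True] p'nn by (intro member_le_sum) auto
          then show ?thesis using True p'nn swin[OF True] p's by (simp add: p3_def)
        qed (simp add: p3_def)
      qed simp
      moreover have "(\<Sum>k<K. p3 k) = 1"
      proof -
        have "(\<Sum>k<K. p3 k) = (\<Sum>k<K. p' (sw k0 K k))" by (simp add: p3_def)
        also have "\<dots> = (\<Sum>k\<in>{..K}. p' k)" using k0 by (intro sum_sw) auto
        finally show ?thesis using p's by simp
      qed
      ultimately show ?thesis unfolding Dl_def by blast
    qed
    have X3S: "X3 \<in> XS" unfolding XS_def
    proof (rule PiE_I)
      fix k :: nat
      show "X3 k \<in> (if k < K then Om else {x0})" using X2Om by (simp add: X3_def)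
    qed simp
    have comb3: "comb p3 X3 c = (1 - t) * q c + t * \<phi> x c" if c: "c \<in> F" for c
    proof -
      have "comb p3 X3 c = (\<Sum>k<K. p' (sw k0 K k) * \<phi> (X2 (sw k0 K k)) c)"
        by (simp add: comb_def p3_def X3_def)
      also have "\<dots> = (\<Sum>k\<in>{..K}. p' k * \<phi> (X2 k) c)"
        using k0 by (intro sum_sw[where g = "\<lambda>k. p' k * \<phi> (X2 k) c"]) auto
      also have "\<dots> = (1 - t) * q c + t * \<phi> x c" using p'c c p2c by simp
      finally show ?thesis .
    qed
    have "\<psi> (p3, X3) = (\<Sum>c\<in>F. (W c + t * e c)\<^sup>2)"
      unfolding \<psi>_def fst_conv snd_conv
      by (intro sum.cong refl) (simp add: comb3 W_def e_def algebra_simps)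
    also have "\<dots> < \<psi> pX" using newlt psiPX by simp
    finally have "\<psi> (p3, X3) < \<psi> pX" .
    moreover have "(p3, X3) \<in> PP" using p3D X3S by (simp add: PP_def)
    ultimately show ?thesis using pXmin by force
  qed
qed

lemma tv_norm1:
  assumes "x \<in> Omega ns m"
  shows "(\<Sum>i\<in>MI ns m. (cmod (tensor_vec m x i))\<^sup>2) = 1"
proof -
  have "(\<Sum>i\<in>MI ns m. (cmod (tensor_vec m x i))\<^sup>2) = (\<Sum>i\<in>MI ns m. \<Prod>j<m. (cmod (x j (i j)))\<^sup>2)"
    by (simp add: tensor_vec_def prod_norm[symmetric] prod_power_distrib)
  also have "\<dots> = (\<Prod>j<m. \<Sum>k<ns j. (cmod (x j k))\<^sup>2)" by (rule sum_MI_prod)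
  also have "\<dots> = 1" using assms by (intro prod.neutral) (simp add: Omega_def)
  finally show ?thesis .
qed

lemma tv_trace1:
  assumes "x \<in> Omega ns m"
  shows "(\<Sum>i\<in>MI ns m. cnj (tensor_vec m x i) * tensor_vec m x i) = 1"
proof -
  have "(\<Sum>i\<in>MI ns m. cnj (tensor_vec m x i) * tensor_vec m x i)
      = (\<Sum>i\<in>MI ns m. complex_of_real ((cmod (tensor_vec m x i))\<^sup>2))"
    by (intro sum.cong refl) (simp only: complex_norm_square mult.commute)
  also have "\<dots> = complex_of_real (\<Sum>i\<in>MI ns m. (cmod (tensor_vec m x i))\<^sup>2)"
    by (simp only: of_real_sum)
  finally show ?thesis using tv_norm1[OF assms] by simp
qed

lemma sum_F3:
  fixes f :: "(nat \<Rightarrow> nat) \<times> (nat \<Rightarrow> nat) \<times> bool \<Rightarrow> real"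
  shows "(\<Sum>c\<in>MI ns m \<times> MI ns m \<times> UNIV. f c) = (\<Sum>i\<in>MI ns m. \<Sum>l\<in>MI ns m. f (i, l, True) + f (i, l, False))"
proof -
  have "(\<Sum>c\<in>MI ns m \<times> MI ns m \<times> UNIV. f c) = (\<Sum>i\<in>MI ns m. \<Sum>lb\<in>MI ns m \<times> UNIV. f (i, lb))"
    by (simp add: sum.cartesian_product)
  also have "\<dots> = (\<Sum>i\<in>MI ns m. \<Sum>l\<in>MI ns m. \<Sum>b\<in>UNIV. f (i, l, b))"
    by (simp add: sum.cartesian_product)
  also have "\<dots> = (\<Sum>i\<in>MI ns m. \<Sum>l\<in>MI ns m. f (i, l, True) + f (i, l, False))"
    by (simp add: UNIV_bool add.commute)
  finally show ?thesis .
qed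

definition reim :: "complex \<Rightarrow> bool \<Rightarrow> real" where
  "reim z b = (if b then Re z else Im z)"

lemma reim_lin: "w1 * reim z True + w2 * reim z False = Re ((of_real w1 - \<i> * of_real w2) * z)"
  by (simp add: reim_def)

lemma herm_pair_identity:
  fixes A M :: "(nat \<Rightarrow> nat) \<Rightarrow> (nat \<Rightarrow> nat) \<Rightarrow> complex" and I :: "(nat \<Rightarrow> nat) set"
  assumes hM: "\<And>i l. i \<in> I \<Longrightarrow> l \<in> I \<Longrightarrow> M l i = cnj (M i l)" and fin: "finite I"
  shows "Re (\<Sum>i\<in>I. \<Sum>l\<in>I. ((A l i + cnj (A i l)) / 2 - (if i = l then of_real c0 else 0)) * M l i)
       = Re (\<Sum>i\<in>I. \<Sum>l\<in>I. A i l * M i l) - c0 * Re (\<Sum>i\<in>I. M i i)"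
proof -
  define S where "S = (\<Sum>i\<in>I. \<Sum>l\<in>I. A i l * M i l)"
  have e1: "(\<Sum>i\<in>I. \<Sum>l\<in>I. A l i * M l i) = S" unfolding S_def by (rule sum.swap)
  have e2: "(\<Sum>i\<in>I. \<Sum>l\<in>I. cnj (A i l) * M l i) = cnj S"
    unfolding S_def cnj_sum
  proof (intro sum.cong refl)
    fix i l assume "i \<in> I" "l \<in> I"
    then have "M l i = cnj (M i l)" by (rule hM)
    then show "cnj (A i l) * M l i = cnj (A i l * M i l)" by simp
  qed
  have e3: "(\<Sum>i\<in>I. \<Sum>l\<in>I. (if i = l then of_real c0 else 0) * M l i) = of_real c0 * (\<Sum>i\<in>I. M i i)"
  proof -
    have "(\<Sum>i\<in>I. \<Sum>l\<in>I. (if i = l then of_real c0 else 0) * M l i) = (\<Sum>i\<in>I. of_real c0 * M i i)"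
    proof (intro sum.cong refl)
      fix i assume i: "i \<in> I"
      have "(\<Sum>l\<in>I. (if i = l then of_real c0 else 0) * M l i) = (\<Sum>l\<in>I. if i = l then of_real c0 * M l i else 0)"
        by (intro sum.cong refl) simp
      also have "\<dots> = of_real c0 * M i i" using i fin by simp
      finally show "(\<Sum>l\<in>I. (if i = l then of_real c0 else 0) * M l i) = of_real c0 * M i i" .
    qed
    then show ?thesis by (simp add: sum_distrib_left)
  qed
  have "(\<Sum>i\<in>I. \<Sum>l\<in>I. ((A l i + cnj (A i l)) / 2 - (if i = l then of_real c0 else 0)) * M l i)
      = ((\<Sum>i\<in>I. \<Sum>l\<in>I. A l i * M l i) + (\<Sum>i\<in>I. \<Sum>l\<in>I. cnj (A i l) * M l i)) / 2
        - (\<Sum>i\<in>I. \<Sum>l\<in>I. (if i = l then of_real c0 else 0) * M l i)"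
    by (simp add: sum_subtractf sum.distrib sum_divide_distrib left_diff_distrib distrib_right add_divide_distrib)
  also have "\<dots> = (S + cnj S) / 2 - of_real c0 * (\<Sum>i\<in>I. M i i)" by (simp add: e1 e2 e3)
  finally show ?thesis by (simp add: S_def)
qed

lemma sep_from_dual:
  assumes ns: "\<forall>j<m. 0 < ns j" and dens: "density_on (MI ns m) \<rho>"
    and H: "\<And>W. hermitian_on (MI ns m) W \<Longrightarrow> (\<forall>x\<in>Omega ns m. 0 \<le> gfun ns m W x) \<Longrightarrow>
              0 \<le> Re (\<Sum>i\<in>MI ns m. \<Sum>l\<in>MI ns m. W i l * \<rho> l i)"
  shows "separable ns m \<rho>"
proof -
  define I where "I = MI ns m"
  define F where "F = I \<times> I \<times> (UNIV :: bool set)"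
  define P where "P = (\<lambda>x i l. tensor_vec m x i * cnj (tensor_vec m x l))"
  define \<phi> where "\<phi> = (\<lambda>x c. case c of (i, l, b) \<Rightarrow> reim (P x i l) b)"
  define z where "z = (\<lambda>c. case c of (i, l, b) \<Rightarrow> reim (\<rho> i l) b)"
  have finI: "finite I" by (simp add: I_def finite_MI)
  have finF: "finite F" using finI by (simp add: F_def)
  have hrho: "\<And>i l. i \<in> I \<Longrightarrow> l \<in> I \<Longrightarrow> \<rho> l i = cnj (\<rho> i l)"
    using dens unfolding density_on_def hermitian_on_def I_def by blast
  have trrho: "(\<Sum>i\<in>I. \<rho> i i) = 1" using dens by (simp add: density_on_def trace_on_def I_def)
  have hP: "\<And>i l. P x l i = cnj (P x i l)" for x by (simp add: P_def)
  have trP: "(\<Sum>i\<in>I. P x i i) = 1" if "x \<in> Omega ns m" for x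
    using tv_trace1[OF that] by (simp add: P_def I_def mult.commute)
  have cont: "continuous_on (Omega ns m) (\<lambda>x. \<phi> x c)" if "c \<in> F" for c
  proof -
    obtain i l b where c: "c = (i, l, b)" by (cases c) auto
    have cP: "continuous_on (Omega ns m) (\<lambda>x. P x i l)"
      unfolding P_def by (intro continuous_on_mult continuous_on_cnj cont_tv)
    show ?thesis
    proof (cases b)
      case True
      then show ?thesis unfolding c \<phi>_def reim_def using continuous_on_Re[OF cP] by simp
    next
      case False
      then show ?thesis unfolding c \<phi>_def reim_def using continuous_on_Im[OF cP] by simp
    qed
  qed
  have Lform: "(\<Sum>c\<in>F. w c * (case c of (i, l, b) \<Rightarrow> reim (M i l) b))
      = Re (\<Sum>i\<in>I. \<Sum>l\<in>I. (of_real (w (i, l, True)) - \<i> * of_real (w (i, l, False))) * M i l)" for w M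
    unfolding F_def I_def sum_F3 by (simp add: reim_lin)
  have hyp: "c0 \<le> (\<Sum>c\<in>F. w c * z c)" if A: "\<forall>x\<in>Omega ns m. c0 \<le> (\<Sum>c\<in>F. w c * \<phi> x c)" for w c0
  proof -
    define Ac where "Ac = (\<lambda>i l. of_real (w (i, l, True)) - \<i> * of_real (w (i, l, False)) :: complex)"
    define W where "W = (\<lambda>i l. (Ac l i + cnj (Ac i l)) / 2 - (if i = l then of_real c0 else 0))"
    have hW: "hermitian_on (MI ns m) W" unfolding hermitian_on_def W_def by auto
    have gW: "0 \<le> gfun ns m W x" if x: "x \<in> Omega ns m" for x
    proof -
      have "gfun ns m W x = Re (\<Sum>i\<in>I. \<Sum>l\<in>I. W i l * P x l i)"
        unfolding gfun_def I_def P_def by (intro arg_cong[where f=Re] sum.cong refl) (simp add: mult_ac)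
      also have "\<dots> = Re (\<Sum>i\<in>I. \<Sum>l\<in>I. Ac i l * P x i l) - c0 * Re (\<Sum>i\<in>I. P x i i)"
        unfolding W_def by (rule herm_pair_identity[OF hP finI])
      also have "\<dots> = (\<Sum>c\<in>F. w c * \<phi> x c) - c0"
        using trP[OF x] Lform[of w "P x"] by (simp add: \<phi>_def Ac_def)
      finally show ?thesis using A x by simp
    qed
    have "0 \<le> Re (\<Sum>i\<in>MI ns m. \<Sum>l\<in>MI ns m. W i l * \<rho> l i)" using H[OF hW] gW by blast
    also have "Re (\<Sum>i\<in>MI ns m. \<Sum>l\<in>MI ns m. W i l * \<rho> l i)
       = Re (\<Sum>i\<in>I. \<Sum>l\<in>I. Ac i l * \<rho> i l) - c0 * Re (\<Sum>i\<in>I. \<rho> i i)"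
      unfolding W_def I_def by (rule herm_pair_identity[OF hrho[unfolded I_def] finI[unfolded I_def]])
    also have "\<dots> = (\<Sum>c\<in>F. w c * z c) - c0"
      using trrho Lform[of w \<rho>] by (simp add: z_def Ac_def)
    finally show ?thesis by simp
  qed
  have ex: "\<exists>(K::nat) p X. (\<forall>k<K. 0 \<le> p k) \<and> (\<Sum>k<K. p k) = 1 \<and> (\<forall>k<K. X k \<in> Omega ns m) \<and>
            (\<forall>c\<in>F. z c = (\<Sum>k<K. p k * \<phi> (X k) c))"
    by (rule conv_sep[OF compact_Omega Omega_nonempty[OF ns] finF cont hyp])
  obtain K :: nat and p X where all: "(\<forall>k<K. 0 \<le> p k) \<and> (\<Sum>k<K. p k) = 1 \<and> (\<forall>k<K. X k \<in> Omega ns m) \<and>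
            (\<forall>c\<in>F. z c = (\<Sum>k<K. p k * \<phi> (X k) c))"
    using ex by (elim exE) (erule that)
  have p0: "\<forall>k<K. 0 \<le> p k" and p1: "(\<Sum>k<K. p k) = 1"
      and XO: "\<forall>k<K. X k \<in> Omega ns m" and zc: "\<forall>c\<in>F. z c = (\<Sum>k<K. p k * \<phi> (X k) c)"
    using all by auto
  have rho_eq: "\<rho> i l = (\<Sum>k<K. complex_of_real (p k) * P (X k) i l)" if "i \<in> I" "l \<in> I" for i l
  proof (rule complex_eqI)
    have "(i, l, True) \<in> F" "(i, l, False) \<in> F" using that by (auto simp: F_def)
    then have "z (i, l, True) = (\<Sum>k<K. p k * \<phi> (X k) (i, l, True))"
         "z (i, l, False) = (\<Sum>k<K. p k * \<phi> (X k) (i, l, False))" using zc by blast+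
    then show "Re (\<rho> i l) = Re (\<Sum>k<K. complex_of_real (p k) * P (X k) i l)"
         "Im (\<rho> i l) = Im (\<Sum>k<K. complex_of_real (p k) * P (X k) i l)"
      by (simp_all add: z_def \<phi>_def reim_def)
  qed
  define \<sigma> where "\<sigma> = (\<lambda>k j a b. X k j a * cnj (X k j b))"
  have dsig: "density_on {..<ns j} (\<sigma> k j)" if k: "k < K" and j: "j < m" for k j
  proof -
    have "hermitian_on {..<ns j} (\<sigma> k j)" by (simp add: hermitian_on_def \<sigma>_def)
    moreover have "psd_on {..<ns j} (\<sigma> k j)"
      unfolding psd_on_def
    proof
      fix v :: "nat \<Rightarrow> complex"
      define s where "s = (\<Sum>a<ns j. cnj (v a) * X k j a)"
      have "(\<Sum>a<ns j. \<Sum>b<ns j. cnj (v a) * \<sigma> k j a b * v b) = s * cnj s"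
      proof -
        have "s * cnj s = (\<Sum>a<ns j. \<Sum>b<ns j. (cnj (v a) * X k j a) * cnj (cnj (v b) * X k j b))"
          unfolding s_def cnj_sum by (rule sum_product)
        also have "\<dots> = (\<Sum>a<ns j. \<Sum>b<ns j. cnj (v a) * \<sigma> k j a b * v b)"
          unfolding \<sigma>_def by (intro sum.cong refl) (simp add: mult_ac)
        finally show ?thesis by simp
      qed
      also have "\<dots> = complex_of_real ((cmod s)\<^sup>2)" by (simp only: complex_norm_square)
      finally show "0 \<le> Re (\<Sum>a<ns j. \<Sum>b<ns j. cnj (v a) * \<sigma> k j a b * v b)" by simp
    qed
    moreover have "trace_on {..<ns j} (\<sigma> k j) = 1"
    proof -
      have "trace_on {..<ns j} (\<sigma> k j) = (\<Sum>a<ns j. complex_of_real ((cmod (X k j a))\<^sup>2))"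
        unfolding trace_on_def \<sigma>_def by (intro sum.cong refl) (simp only: complex_norm_square)
      also have "\<dots> = complex_of_real (\<Sum>a<ns j. (cmod (X k j a))\<^sup>2)" by (simp only: of_real_sum)
      also have "\<dots> = 1" using XO k j by (simp add: Omega_def)
      finally show ?thesis .
    qed
    ultimately show ?thesis by (simp add: density_on_def)
  qed
  have tm: "tensor_mat m (\<sigma> k) i l = P (X k) i l" for k i l
    by (simp add: tensor_mat_def \<sigma>_def P_def tensor_vec_def prod.distrib)
  show ?thesis
    unfolding separable_def
    apply (rule exI[of _ K], rule exI[of _ p], rule exI[of _ \<sigma>])
    using p0 p1 dsig rho_eq tm by (simp add: I_def)
qed

lemma sum_swap3:
  "(\<Sum>i\<in>A. \<Sum>l\<in>B. \<Sum>k\<in>C. f i l k) = (\<Sum>k\<in>C. \<Sum>i\<in>A. \<Sum>l\<in>B. f i l k)"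
proof -
  have "(\<Sum>i\<in>A. \<Sum>l\<in>B. \<Sum>k\<in>C. f i l k) = (\<Sum>i\<in>A. \<Sum>k\<in>C. \<Sum>l\<in>B. f i l k)"
    by (intro sum.cong refl) (rule sum.swap)
  also have "\<dots> = (\<Sum>k\<in>C. \<Sum>i\<in>A. \<Sum>l\<in>B. f i l k)" by (rule sum.swap)
  finally show ?thesis .
qed

lemma gfun_sum:
  "gfun ns m (\<lambda>i l. \<Sum>k<N. complex_of_real (c k) * G k i l) x = (\<Sum>k<N. c k * gfun ns m (G k) x)"
proof -
  let ?t = "tensor_vec m x"
  have "(\<Sum>i\<in>MI ns m. \<Sum>l\<in>MI ns m. cnj (?t i) * (\<Sum>k<N. complex_of_real (c k) * G k i l) * ?t l)
      = (\<Sum>i\<in>MI ns m. \<Sum>l\<in>MI ns m. \<Sum>k<N. complex_of_real (c k) * (cnj (?t i) * G k i l * ?t l))"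
    by (intro sum.cong refl) (simp add: sum_distrib_left sum_distrib_right mult_ac)
  also have "\<dots> = (\<Sum>k<N. \<Sum>i\<in>MI ns m. \<Sum>l\<in>MI ns m. complex_of_real (c k) * (cnj (?t i) * G k i l * ?t l))"
    by (rule sum_swap3)
  also have "\<dots> = (\<Sum>k<N. complex_of_real (c k) * (\<Sum>i\<in>MI ns m. \<Sum>l\<in>MI ns m. cnj (?t i) * G k i l * ?t l))"
    by (simp add: sum_distrib_left)
  finally show ?thesis unfolding gfun_def by simp
qed

lemma tr_sum:
  "Re (\<Sum>i\<in>I. \<Sum>l\<in>I. (\<Sum>k<N. complex_of_real (c k) * G k i l) * M l i)
     = (\<Sum>k<N. c k * Re (\<Sum>i\<in>I. \<Sum>l\<in>I. G k i l * M l i))"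
proof -
  have "(\<Sum>i\<in>I. \<Sum>l\<in>I. (\<Sum>k<N. complex_of_real (c k) * G k i l) * M l i)
      = (\<Sum>i\<in>I. \<Sum>l\<in>I. \<Sum>k<N. complex_of_real (c k) * (G k i l * M l i))"
    by (intro sum.cong refl) (simp add: sum_distrib_right mult.assoc)
  also have "\<dots> = (\<Sum>k<N. \<Sum>i\<in>I. \<Sum>l\<in>I. complex_of_real (c k) * (G k i l * M l i))"
    by (rule sum_swap3)
  also have "\<dots> = (\<Sum>k<N. complex_of_real (c k) * (\<Sum>i\<in>I. \<Sum>l\<in>I. G k i l * M l i))"
    by (simp add: sum_distrib_left)
  finally show ?thesis by simp
qed

lemma gfun_as_tr: "gfun ns m G x = Re (\<Sum>i\<in>MI ns m. \<Sum>l\<in>MI ns m. G i l * (tensor_vec m x l * cnj (tensor_vec m x i)))"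
  unfolding gfun_def by (intro arg_cong[where f=Re] sum.cong refl) (simp add: mult_ac)

lemma sum_shift:
  fixes W M :: "'i \<Rightarrow> 'i \<Rightarrow> complex" and d :: complex
  assumes "finite I"
  shows "(\<Sum>i\<in>I. \<Sum>l\<in>I. (- W i l - (if i = l then d else 0)) * M l i)
       = - (\<Sum>i\<in>I. \<Sum>l\<in>I. W i l * M l i) - d * (\<Sum>i\<in>I. M i i)"
proof -
  have e3: "(\<Sum>i\<in>I. \<Sum>l\<in>I. (if i = l then d else 0) * M l i) = d * (\<Sum>i\<in>I. M i i)"
  proof -
    have "(\<Sum>i\<in>I. \<Sum>l\<in>I. (if i = l then d else 0) * M l i) = (\<Sum>i\<in>I. d * M i i)"
    proof (intro sum.cong refl)
      fix i assume i: "i \<in> I"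
      have "(\<Sum>l\<in>I. (if i = l then d else 0) * M l i) = (\<Sum>l\<in>I. if i = l then d * M l i else 0)"
        by (intro sum.cong refl) simp
      also have "\<dots> = d * M i i" using i assms by simp
      finally show "(\<Sum>l\<in>I. (if i = l then d else 0) * M l i) = d * M i i" .
    qed
    then show ?thesis by (simp add: sum_distrib_left)
  qed
  have "(\<Sum>i\<in>I. \<Sum>l\<in>I. (- W i l - (if i = l then d else 0)) * M l i)
      = - (\<Sum>i\<in>I. \<Sum>l\<in>I. W i l * M l i) - (\<Sum>i\<in>I. \<Sum>l\<in>I. (if i = l then d else 0) * M l i)"
    by (simp add: left_diff_distrib sum_subtractf sum_negf)
  then show ?thesis using e3 by simp
qed

lemma gfun_zero: "gfun ns m (\<lambda>i l. 0) x = 0" by (simp add: gfun_def)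

theorem theorem2:
  fixes ns :: "nat \<Rightarrow> nat" and m :: nat
    and \<rho> :: "(nat \<Rightarrow> nat) \<Rightarrow> (nat \<Rightarrow> nat) \<Rightarrow> complex"
  assumes "\<forall>j<m. 0 < ns j"
    and "density_on (MI ns m) \<rho>"
  shows "entangled ns m \<rho> \<longleftrightarrow>
    (\<exists>f \<in> posi_on (Omega ns m) (Cset ns m \<rho> \<union> Lge ns m).
       (SUP x\<in>Omega ns m. f x) < 0)"
proof
  note ns = assms(1) and dens = assms(2)
  have Om_ne: "Omega ns m \<noteq> {}" using Omega_nonempty[OF ns] by blast
  have trrho: "(\<Sum>i\<in>MI ns m. \<rho> i i) = 1" using dens by (simp add: density_on_def trace_on_def)
  {
    assume ent: "entangled ns m \<rho>"
    show "\<exists>f \<in> posi_on (Omega ns m) (Cset ns m \<rho> \<union> Lge ns m). (SUP x\<in>Omega ns m. f x) < 0"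
    proof (rule ccontr)
      assume nf: "\<not> (\<exists>f \<in> posi_on (Omega ns m) (Cset ns m \<rho> \<union> Lge ns m). (SUP x\<in>Omega ns m. f x) < 0)"
      have H: "0 \<le> Re (\<Sum>i\<in>MI ns m. \<Sum>l\<in>MI ns m. W i l * \<rho> l i)"
        if hW: "hermitian_on (MI ns m) W" and gW: "\<forall>x\<in>Omega ns m. 0 \<le> gfun ns m W x" for W
      proof (rule ccontr)
        assume neg: "\<not> 0 \<le> Re (\<Sum>i\<in>MI ns m. \<Sum>l\<in>MI ns m. W i l * \<rho> l i)"
        define \<delta> where "\<delta> = - Re (\<Sum>i\<in>MI ns m. \<Sum>l\<in>MI ns m. W i l * \<rho> l i)"
        have \<delta>pos: "\<delta> > 0" using neg by (simp add: \<delta>_def)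
        define G where "G = (\<lambda>i l. - W i l - (if i = l then complex_of_real \<delta> else 0))"
        have hG: "hermitian_on (MI ns m) G"
          unfolding hermitian_on_def
        proof (intro ballI)
          fix i k assume ik: "i \<in> MI ns m" "k \<in> MI ns m"
          have "W k i = cnj (W i k)" using hW ik unfolding hermitian_on_def by blast
          then show "G k i = cnj (G i k)" unfolding G_def by auto
        qed
        have trG: "Re (\<Sum>i\<in>MI ns m. \<Sum>l\<in>MI ns m. G i l * \<rho> l i) = 0"
          unfolding G_def sum_shift[OF finite_MI] trrho by (simp add: \<delta>_def)
        have gG: "gfun ns m G x = - gfun ns m W x - \<delta>" if x: "x \<in> Omega ns m" for x
        proof -
          have "gfun ns m G x = Re (- (\<Sum>i\<in>MI ns m. \<Sum>l\<in>MI ns m. W i l * (tensor_vec m x l * cnj (tensor_vec m x i)))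
                 - complex_of_real \<delta> * (\<Sum>i\<in>MI ns m. tensor_vec m x i * cnj (tensor_vec m x i)))"
            unfolding gfun_as_tr G_def sum_shift[OF finite_MI] ..
          also have "(\<Sum>i\<in>MI ns m. tensor_vec m x i * cnj (tensor_vec m x i)) = 1"
            using tv_trace1[OF x] by (simp add: mult.commute)
          finally show ?thesis by (simp add: gfun_as_tr[of ns m W x])
        qed
        have "gfun ns m G \<in> posi_on (Omega ns m) (Cset ns m \<rho> \<union> Lge ns m)"
        proof -
          have "gfun ns m G \<in> Cset ns m \<rho>" unfolding Cset_def using hG trG by auto
          then show ?thesis unfolding posi_on_def
            by (intro CollectI exI[of _ "1::nat"] exI[of _ "\<lambda>_. 1::real"] exI[of _ "\<lambda>_. gfun ns m G"]) auto
        qed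
        moreover have "(SUP x\<in>Omega ns m. gfun ns m G x) < 0"
        proof -
          have "(SUP x\<in>Omega ns m. gfun ns m G x) \<le> - \<delta>"
            using Om_ne by (rule cSUP_least) (use gG gW in force)
          then show ?thesis using \<delta>pos by simp
        qed
        ultimately show False using nf by blast
      qed
      have "separable ns m \<rho>" by (rule sep_from_dual[OF ns dens H])
      then show False using ent by (simp add: entangled_def)
    qed
  }
  {
    assume "\<exists>f \<in> posi_on (Omega ns m) (Cset ns m \<rho> \<union> Lge ns m). (SUP x\<in>Omega ns m. f x) < 0"
    then obtain f where fP: "f \<in> posi_on (Omega ns m) (Cset ns m \<rho> \<union> Lge ns m)"
      and fS: "(SUP x\<in>Omega ns m. f x) < 0" by blast
    obtain N :: nat and c :: "nat \<Rightarrow> real" and h where ch: "\<forall>k<N. 0 \<le> c k \<and> h k \<in> Cset ns m \<rho> \<union> Lge ns m"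
      and fx: "\<forall>x\<in>Omega ns m. f x = (\<Sum>k<N. c k * h k x)"
      using fP unfolding posi_on_def by blast
    have each: "\<exists>GB. hermitian_on (MI ns m) (fst GB) \<and> 0 \<le> Re (\<Sum>i\<in>MI ns m. \<Sum>l\<in>MI ns m. fst GB i l * \<rho> l i)
        \<and> (\<forall>x\<in>Omega ns m. gfun ns m (fst GB) x \<le> h k x \<and> h k x \<le> snd GB)" if k: "k \<in> {..<N}" for k
    proof -
      have hk: "h k \<in> Cset ns m \<rho> \<union> Lge ns m" using ch k by auto
      then show ?thesis
      proof
        assume "h k \<in> Cset ns m \<rho>"
        then obtain G where G: "h k = gfun ns m G" "hermitian_on (MI ns m) G"
          "0 \<le> Re (\<Sum>i\<in>MI ns m. \<Sum>l\<in>MI ns m. G i l * \<rho> l i)" unfolding Cset_def by blast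
        obtain B where B: "\<forall>y\<in>gfun ns m G ` Omega ns m. \<bar>y\<bar> \<le> B"
          using gfun_bounded[of ns m G] unfolding bounded_real by blast
        show ?thesis
          by (rule exI[of _ "(G, B)"]) (use G B in auto)
      next
        assume "h k \<in> Lge ns m"
        then have bd: "bounded (h k ` Omega ns m)" and inf0: "0 \<le> (INF x\<in>Omega ns m. h k x)"
          unfolding Lge_def by auto
        obtain B where B: "\<forall>y\<in>h k ` Omega ns m. \<bar>y\<bar> \<le> B"
          using bd unfolding bounded_real by blast
        have "0 \<le> h k x" if "x \<in> Omega ns m" for x
          using inf0 cINF_lower[OF bounded_imp_bdd_below[OF bd] that] by linarith
        then show ?thesis
          by (intro exI[of _ "((\<lambda>i l. 0), B)"]) (use B in \<open>auto simp: gfun_zero hermitian_on_def\<close>)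
      qed
    qed
    obtain GB where GB: "\<forall>k\<in>{..<N}. hermitian_on (MI ns m) (fst (GB k)) \<and>
        0 \<le> Re (\<Sum>i\<in>MI ns m. \<Sum>l\<in>MI ns m. fst (GB k) i l * \<rho> l i) \<and>
        (\<forall>x\<in>Omega ns m. gfun ns m (fst (GB k)) x \<le> h k x \<and> h k x \<le> snd (GB k))"
    proof -
      have ex: "\<forall>k\<in>{..<N}. \<exists>GB. hermitian_on (MI ns m) (fst GB) \<and> 0 \<le> Re (\<Sum>i\<in>MI ns m. \<Sum>l\<in>MI ns m. fst GB i l * \<rho> l i)
        \<and> (\<forall>x\<in>Omega ns m. gfun ns m (fst GB) x \<le> h k x \<and> h k x \<le> snd GB)"
        by (rule ballI) (rule each)
      show ?thesis using bchoice[OF ex] by (elim exE) (erule that)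
    qed
    define G where "G = (\<lambda>i l. \<Sum>k<N. complex_of_real (c k) * fst (GB k) i l)"
    have fbd: "f x \<le> (\<Sum>k<N. c k * snd (GB k))" if x: "x \<in> Omega ns m" for x
      unfolding fx[rule_format, OF x]
      by (intro sum_mono mult_left_mono) (use ch GB x in auto)
    have bdd: "bdd_above (f ` Omega ns m)" using fbd by (intro bdd_aboveI2) 
    define s where "s = (SUP x\<in>Omega ns m. f x)"
    have gG: "gfun ns m G x \<le> s" if x: "x \<in> Omega ns m" for x
    proof -
      have "gfun ns m G x = (\<Sum>k<N. c k * gfun ns m (fst (GB k)) x)" unfolding G_def by (rule gfun_sum)
      also have "\<dots> \<le> (\<Sum>k<N. c k * h k x)"
        by (intro sum_mono mult_left_mono) (use ch GB x in auto)
      also have "\<dots> = f x" using fx x by simp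
      also have "f x \<le> s" unfolding s_def by (rule cSUP_upper[OF x bdd])
      finally show ?thesis .
    qed
    have trG: "0 \<le> Re (\<Sum>i\<in>MI ns m. \<Sum>l\<in>MI ns m. G i l * \<rho> l i)"
      unfolding G_def tr_sum using ch GB by (intro sum_nonneg mult_nonneg_nonneg) auto
    show "entangled ns m \<rho>"
      unfolding entangled_def
    proof (intro conjI notI)
      show "density_on (MI ns m) \<rho>" by (rule dens)
      assume sep: "separable ns m \<rho>"
      define Hm where "Hm = (\<lambda>i l. - G i l)"
      have "\<forall>x\<in>Omega ns m. - s \<le> gfun ns m Hm x"
      proof
        fix x assume x: "x \<in> Omega ns m"
        have "gfun ns m Hm x = - gfun ns m G x" by (simp add: Hm_def gfun_def sum_negf)
        then show "- s \<le> gfun ns m Hm x" using gG[OF x] by simp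
      qed
      from sep_lower[OF this sep]
      have "- s \<le> Re (\<Sum>i\<in>MI ns m. \<Sum>l\<in>MI ns m. Hm i l * \<rho> l i)" .
      also have "\<dots> = - Re (\<Sum>i\<in>MI ns m. \<Sum>l\<in>MI ns m. G i l * \<rho> l i)"
        by (simp add: Hm_def sum_negf)
      finally show False using trG fS by (simp add: s_def)
    qed
  }
qed

end
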